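(* Let $n\ge2$ and $\mathcal{W}=\mathcal{W}_{\lambda_-,\lambda_+}$ with $\lambda_-\le\lambda_+\in(-1,1)$. Consider a performance evaluation setting $\mathcal{S}_n=\{n,\mathcal{A},K,\mathcal{P},\mathcal{F},\mathcal{I},\mathcal{W}\}$ in which the algorithm $\mathcal{A}\in\mathcal{A}_d$, the performance measure $\mathcal{P}$, the initial conditions $\mathcal{I}$ and the interpolation constraints for $\mathcal{F}$ are linearly (or LMI) Gram-representable, and assume all the agents are equivalent in the PEP. Then: 1. The computation of $w(\mathcal{S}_n)$ can be formulated as an SDP with variables $f^A\in\mathbb{R}^q$, $G^A\in\mathbb{R}^{p\times p}$, $G^C\in\mathbb{R}^{p\times p}$, whose size is independent of $n$. 2. If, in addition, $\mathcal{P}$ is scale-invariant and $\mathcal{I}$ only contains single-agent constraints (each applied to every agent $i$) and scale-invariant constraints, then the resulting SDP and its optimal value $w(\mathcal{S}_n)$ are independent of $n$.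
   Context: Distributed optimization: $n$ agents with local functions $f_i:\mathbb{R}^d\to\mathbb{R}$ minimize $f(x)=\frac1n\sum_if_i(x)$. $\mathcal{A}_d$ is the class of algorithms built from (i) local gradient evaluations $g_i=\nabla f_i(x_i)$ at any local variable, (ii) consensus steps $\mathbf{y}=(W\otimes I_d)\mathbf{x}$ (i.e. $y_i=\sum_jw_{ij}x_j$) with $W\in\mathcal{W}$, (iii) linear combinations of an agent's local variables with coefficients known in advance. $\mathcal{W}_{\lambda_-,\lambda_+}$ is the set of symmetric $W\in\mathbb{R}^{n\times n}$ with $\lambda_1(W)=1$, eigenvector $\mathbf{1}/\sqrt n$, other eigenvalues in $[\lambda_-,\lambda_+]$. The setting $\mathcal{S}_n$ specifies $n$, the algorithm $\mathcal{A}$, the number of iterations $K$, the performance criterion $\mathcal{P}$, the class $\mathcal{F}$ of local functions, the initial conditions $\mathcal{I}$, and $\mathcal{W}$. Agent-dependent SDP PEP: each agent $i$ holds $p$ vector variables (iterates, consensus outputs, gradients at these points, and copies of points common to all agents such as the minimizer $x^*$ with $\nabla f_i(x^* )$), gathered as columns of $P_i\in\mathbb{R}^{d\times p}$ in a common order, and $q$ function values in $f_i\in\mathbb{R}^q$; variables $F=[f_1^T\dots f_n^T]$, $G=P^TP\succeq0$, $P=[P_1\dots P_n]$, $G_{ij}=P_i^TP_j$. An expression or constraint is linearly (resp. LMI) Gram-representable if it is given by finitely many linear (resp. linear matrix inequality) constraints or expressions in $(F,G)$. The PEP maximizes $\mathcal{P}(F,G)$ subject to $G\succeq0$, the algorithm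 constraints, interpolation constraints for $\mathcal{F}$ on each agent's triplets (point, gradient, value), the initial conditions, the optimality condition $\frac1n\sum_i\nabla f_i(x^* )=0$, and, for each set of consensus steps using a common matrix, with $X=[\mathbf{x}^1\dots\mathbf{x}^K]$, $Y=[\mathbf{y}^1\dots\mathbf{y}^K]\in\mathbb{R}^{nd\times K}$: $\bar X=\bar Y$, $(Y_\perp-\lambda_-X_\perp)^T(Y_\perp-\lambda_+X_\perp)\preceq0$, $X_\perp^TY_\perp=Y_\perp^TX_\perp$, where $\bar X$ replaces each agent's component by the agent average and $X_\perp=X-\bar X$. $w(\mathcal{S}_n)$ denotes the optimal value of this SDP. Agents $i,j$ are equivalent if for every feasible $(F,G)$, swapping the blocks of agents $i$ and $j$ gives a feasible solution with the same objective value. $f^A$, $G^A$, $G^C$ denote, respectively, the common agent block of function values, the common diagonal block, and the common off-diagonal block of a solution in which all $f_i$ are equal, all $G_{ii}$ are equal, and all $G_{ij}$ ($i\ne j$) are equal. A Gram-representable expression $h$ is scale-invariant if $h=\sum_jc_jh_j$ with coefficients $c_j$ independent of $n$ and each $h_j$ of one of the forms $\frac1n\sum_if_i(x_i)$, $\frac1n\sum_ix_i^Ty_i$, $\frac1{n^2}\sum_i\sum_jx_i^Ty_j$ for local variables $x_i,y_j$ of agents $i,j$ (common points being copied in each agent's variables); a constraint $h\le D$ is scale-invariant if $h$ is. An expression is single-agent if it is a linear combination, with coefficients independent of $n$, of terms involving only the local variables and local function of one agent $i$; a constraint $h\le D$ is single-agent if $h$ is. *)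

theory Defs
  imports Complex_Main "HOL-Library.Extended_Real" "HOL-Combinatorics.Transposition"
begin

text \<open>
  Agent i holds p vector variables (columns of P_i)
  and q function values.  Indices: agents i < n, vector columns a < p, values a < q.
    F i a        = a-th function value of agent i          (the block f_i of F)
    G i j a b    = (P_i^T P_j)_{ab}                         (the block G_ij of G = P^T P)
\<close>

type_synonym fvals = "nat \<Rightarrow> nat \<Rightarrow> real"
type_synonym gram = "nat \<Rightarrow> nat \<Rightarrow> nat \<Rightarrow> nat \<Rightarrow> real"

definition psd_mat :: "nat \<Rightarrow> (nat \<Rightarrow> nat \<Rightarrow> real) \<Rightarrow> bool" where
  "psd_mat m M \<longleftrightarrow> (\<forall>k<m. \<forall>l<m. M k l = M l k) \<and>
     (\<forall>v. 0 \<le> (\<Sum>k<m. \<Sum>l<m. v k * M k l * v l))"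

definition psd_gram :: "nat \<Rightarrow> nat \<Rightarrow> gram \<Rightarrow> bool" where
  "psd_gram n p G \<longleftrightarrow> (\<forall>i<n. \<forall>j<n. \<forall>a<p. \<forall>b<p. G i j a b = G j i b a) \<and>
     (\<forall>v. 0 \<le> (\<Sum>i<n. \<Sum>j<n. \<Sum>a<p. \<Sum>b<p. v i a * G i j a b * v j b))"

definition gram_affine :: "nat \<Rightarrow> nat \<Rightarrow> nat \<Rightarrow> (fvals \<Rightarrow> gram \<Rightarrow> real) \<Rightarrow> bool" where
  "gram_affine n p q h \<longleftrightarrow> (\<exists>c0 cF cG. \<forall>F G. h F G = c0 + (\<Sum>i<n. \<Sum>a<q. cF i a * F i a)
      + (\<Sum>i<n. \<Sum>j<n. \<Sum>a<p. \<Sum>b<p. cG i j a b * G i j a b))"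

text \<open>A constraint set given by finitely many LMIs whose entries are affine in (F,G)
  (linear inequalities/equalities are 1 x 1 LMIs).\<close>
definition lmi_representable :: "nat \<Rightarrow> nat \<Rightarrow> nat \<Rightarrow> (fvals \<Rightarrow> gram \<Rightarrow> bool) \<Rightarrow> bool" where
  "lmi_representable n p q C \<longleftrightarrow>
     (\<exists>cs :: (nat \<times> (nat \<Rightarrow> nat \<Rightarrow> fvals \<Rightarrow> gram \<Rightarrow> real)) list.
        (\<forall>(m, M) \<in> set cs. \<forall>k<m. \<forall>l<m. gram_affine n p q (M k l)) \<and>
        (\<forall>F G. C F G \<longleftrightarrow> (\<forall>(m, M) \<in> set cs. psd_mat m (\<lambda>k l. M k l F G))))"

record sa_expr =
  sa_c0 :: real
  sa_cf :: "nat \<Rightarrow> real"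
  sa_cg :: "nat \<Rightarrow> nat \<Rightarrow> real"

definition sa_eval :: "nat \<Rightarrow> nat \<Rightarrow> sa_expr \<Rightarrow> fvals \<Rightarrow> gram \<Rightarrow> nat \<Rightarrow> real" where
  "sa_eval p q e F G i = sa_c0 e + (\<Sum>a<q. sa_cf e a * F i a)
      + (\<Sum>a<p. \<Sum>b<p. sa_cg e a b * G i i a b)"

type_synonym sa_lmi = "nat \<times> (nat \<Rightarrow> nat \<Rightarrow> sa_expr)"

definition sa_holds :: "nat \<Rightarrow> nat \<Rightarrow> sa_lmi \<Rightarrow> fvals \<Rightarrow> gram \<Rightarrow> nat \<Rightarrow> bool" where
  "sa_holds p q c F G i \<longleftrightarrow> psd_mat (fst c) (\<lambda>k l. sa_eval p q (snd c k l) F G i)"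

definition avgF :: "nat \<Rightarrow> fvals \<Rightarrow> nat \<Rightarrow> real" where
  "avgF n F a = (\<Sum>i<n. F i a) / real n"

definition avgD :: "nat \<Rightarrow> gram \<Rightarrow> nat \<Rightarrow> nat \<Rightarrow> real" where
  "avgD n G a b = (\<Sum>i<n. G i i a b) / real n"

definition avg_inner :: "nat \<Rightarrow> gram \<Rightarrow> nat \<Rightarrow> nat \<Rightarrow> real" where
  "avg_inner n G a b = (\<Sum>i<n. \<Sum>j<n. G i j a b) / (real n)^2"

record si_expr =
  si_c0 :: real
  si_cf :: "nat \<Rightarrow> real"
  si_cA :: "nat \<Rightarrow> nat \<Rightarrow> real"
  si_cC :: "nat \<Rightarrow> nat \<Rightarrow> real"

definition si_eval :: "nat \<Rightarrow> nat \<Rightarrow> nat \<Rightarrow> si_expr \<Rightarrow> fvals \<Rightarrow> gram \<Rightarrow> real" where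
  "si_eval n p q e F G = si_c0 e + (\<Sum>a<q. si_cf e a * avgF n F a)
      + (\<Sum>a<p. \<Sum>b<p. si_cA e a b * avgD n G a b)
      + (\<Sum>a<p. \<Sum>b<p. si_cC e a b * avg_inner n G a b)"

type_synonym si_lmi = "nat \<times> (nat \<Rightarrow> nat \<Rightarrow> si_expr)"

definition si_holds :: "nat \<Rightarrow> nat \<Rightarrow> nat \<Rightarrow> si_lmi \<Rightarrow> fvals \<Rightarrow> gram \<Rightarrow> bool" where
  "si_holds n p q c F G \<longleftrightarrow> psd_mat (fst c) (\<lambda>k l. si_eval n p q (snd c k l) F G)"

text \<open>Consensus constraints.  A block (xs, ys) lists the columns of x^1..x^K and y^1..y^K.
  perpG a b = sum_i (u_i - ubar)^T (w_i - wbar) for columns a (u) and b (w).\<close>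
definition perpG :: "nat \<Rightarrow> gram \<Rightarrow> nat \<Rightarrow> nat \<Rightarrow> real" where
  "perpG n G a b = (\<Sum>i<n. G i i a b) - (\<Sum>i<n. \<Sum>j<n. G i j a b) / real n"

definition consensus_holds :: "nat \<Rightarrow> real \<Rightarrow> real \<Rightarrow> nat list \<times> nat list \<Rightarrow> gram \<Rightarrow> bool" where
  "consensus_holds n lm lp blk G \<longleftrightarrow>
     (let xs = fst blk; ys = snd blk; K = length xs in
       \<comment> \<open>Xbar = Ybar, i.e. ||xbar^k - ybar^k||^2 = 0\<close>
       (\<forall>k<K. avg_inner n G (xs!k) (xs!k) - 2 * avg_inner n G (xs!k) (ys!k)
              + avg_inner n G (ys!k) (ys!k) = 0) \<and>
       \<comment> \<open>X_perp^T Y_perp = Y_perp^T X_perp\<close>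
       (\<forall>k<K. \<forall>l<K. perpG n G (xs!k) (ys!l) = perpG n G (ys!k) (xs!l)) \<and>
       \<comment> \<open>(Y_perp - lm X_perp)^T (Y_perp - lp X_perp) \<preceq> 0\<close>
       psd_mat K (\<lambda>k l. - (perpG n G (ys!k) (ys!l) - lp * perpG n G (ys!k) (xs!l)
                          - lm * perpG n G (xs!k) (ys!l) + lm * lp * perpG n G (xs!k) (xs!l))))"

text \<open>The n-independent data of a setting: dimensions p, q; spectral bounds of W;
  single-agent constraints applied to every agent (algorithm's local linear steps and
  interpolation constraints of the class F on each agent's triplets); columns of points
  common to all agents (e.g. x^*); column of grad f_i(x^*); consensus blocks.\<close>
record pep_data =
  pd_p :: nat
  pd_q :: nat
  pd_lmin :: real
  pd_lmax :: real
  pd_local :: "sa_lmi list"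
  pd_common :: "nat list"
  pd_gopt :: nat
  pd_cons :: "(nat list \<times> nat list) list"

definition pep_wf :: "pep_data \<Rightarrow> bool" where
  "pep_wf D \<longleftrightarrow> (\<forall>c \<in> set (pd_common D). c < pd_p D) \<and> pd_gopt D < pd_p D \<and>
     (\<forall>blk \<in> set (pd_cons D). length (fst blk) = length (snd blk) \<and>
        (\<forall>c \<in> set (fst blk) \<union> set (snd blk). c < pd_p D))"

definition pep_feasible :: "nat \<Rightarrow> pep_data \<Rightarrow> (fvals \<Rightarrow> gram \<Rightarrow> bool) \<Rightarrow> fvals \<Rightarrow> gram \<Rightarrow> bool" where
  "pep_feasible n D Init F G \<longleftrightarrow>
     psd_gram n (pd_p D) G \<and>
     (\<forall>i<n. \<forall>c \<in> set (pd_local D). sa_holds (pd_p D) (pd_q D) c F G i) \<and>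
     (\<forall>c \<in> set (pd_common D). \<forall>i<n. \<forall>j<n. G i i c c - 2 * G i j c c + G j j c c = 0) \<and>
     avg_inner n G (pd_gopt D) (pd_gopt D) = 0 \<and>
     (\<forall>blk \<in> set (pd_cons D). consensus_holds n (pd_lmin D) (pd_lmax D) blk G) \<and>
     Init F G"

definition pep_value :: "nat \<Rightarrow> pep_data \<Rightarrow> (fvals \<Rightarrow> gram \<Rightarrow> bool) \<Rightarrow> (fvals \<Rightarrow> gram \<Rightarrow> real) \<Rightarrow> ereal" where
  "pep_value n D Init Perf =
     (SUP FG \<in> {(F, G). pep_feasible n D Init F G}. ereal (Perf (fst FG) (snd FG)))"

definition swapF :: "nat \<Rightarrow> nat \<Rightarrow> fvals \<Rightarrow> fvals" where
  "swapF i j F = (\<lambda>k. F (transpose i j k))"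

definition swapG :: "nat \<Rightarrow> nat \<Rightarrow> gram \<Rightarrow> gram" where
  "swapG i j G = (\<lambda>k l. G (transpose i j k) (transpose i j l))"

definition agents_equivalent :: "nat \<Rightarrow> pep_data \<Rightarrow> (fvals \<Rightarrow> gram \<Rightarrow> bool) \<Rightarrow> (fvals \<Rightarrow> gram \<Rightarrow> real) \<Rightarrow> bool" where
  "agents_equivalent n D Init Perf \<longleftrightarrow>
     (\<forall>i<n. \<forall>j<n. \<forall>F G. pep_feasible n D Init F G \<longrightarrow>
        pep_feasible n D Init (swapF i j F) (swapG i j G) \<and>
        Perf (swapF i j F) (swapG i j G) = Perf F G)"

definition symF :: "(nat \<Rightarrow> real) \<Rightarrow> fvals" where
  "symF fA = (\<lambda>i. fA)"

definition symG :: "(nat \<Rightarrow> nat \<Rightarrow> real) \<Rightarrow> (nat \<Rightarrow> nat \<Rightarrow> real) \<Rightarrow> gram" where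
  "symG GA GC = (\<lambda>i j. if i = j then GA else GC)"

definition reduced_value :: "nat \<Rightarrow> pep_data \<Rightarrow> (fvals \<Rightarrow> gram \<Rightarrow> bool) \<Rightarrow> (fvals \<Rightarrow> gram \<Rightarrow> real) \<Rightarrow> ereal" where
  "reduced_value n D Init Perf =
     (SUP X \<in> {(fA, GA, GC). pep_feasible n D Init (symF fA) (symG GA GC)}.
        ereal (Perf (symF (fst X)) (symG (fst (snd X)) (snd (snd X)))))"

text \<open>Feasible set of the reduced SDP expressed in the variables
  (f^A, G^A, (G^A + (n-1) G^C)/n), the latter being the Gram block of the agent average.\<close>
definition reduced_set :: "nat \<Rightarrow> pep_data \<Rightarrow> (fvals \<Rightarrow> gram \<Rightarrow> bool)
     \<Rightarrow> ((nat \<Rightarrow> real) \<times> (nat \<Rightarrow> nat \<Rightarrow> real) \<times> (nat \<Rightarrow> nat \<Rightarrow> real)) set" where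
  "reduced_set n D Init =
     {(fA, GA, (\<lambda>a b. (GA a b + (real n - 1) * GC a b) / real n)) | fA GA GC.
        pep_feasible n D Init (symF fA) (symG GA GC)}"

end

theory Submission
  imports Defs "HOL-Combinatorics.Permutations"
begin

definition combF :: "(nat \<Rightarrow> nat) set \<Rightarrow> ((nat \<Rightarrow> nat) \<Rightarrow> real) \<Rightarrow> ((nat \<Rightarrow> nat) \<Rightarrow> fvals) \<Rightarrow> fvals" where
  "combF S w Fs = (\<lambda>i a. \<Sum>s\<in>S. w s * Fs s i a)"
definition combG :: "(nat \<Rightarrow> nat) set \<Rightarrow> ((nat \<Rightarrow> nat) \<Rightarrow> real) \<Rightarrow> ((nat \<Rightarrow> nat) \<Rightarrow> gram) \<Rightarrow> gram" where
  "combG S w Gs = (\<lambda>i j a b. \<Sum>s\<in>S. w s * Gs s i j a b)"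

definition agree :: "nat \<Rightarrow> fvals \<Rightarrow> gram \<Rightarrow> fvals \<Rightarrow> gram \<Rightarrow> bool" where
  "agree m F G F' G' \<longleftrightarrow> (\<forall>i<m. F i = F' i) \<and> (\<forall>i<m. \<forall>j<m. G i j = G' i j)"

definition goodf :: "nat \<Rightarrow> (fvals \<Rightarrow> gram \<Rightarrow> real) \<Rightarrow> bool" where
  "goodf m h \<longleftrightarrow> (\<forall>S w Fs Gs. finite S \<longrightarrow> sum w S = 1 \<longrightarrow>
      h (combF S w Fs) (combG S w Gs) = (\<Sum>s\<in>S. w s * h (Fs s) (Gs s))) \<and>
     (\<forall>F G F' G'. agree m F G F' G' \<longrightarrow> h F G = h F' G')"

definition cvxp :: "nat \<Rightarrow> (fvals \<Rightarrow> gram \<Rightarrow> bool) \<Rightarrow> bool" where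
  "cvxp m P \<longleftrightarrow> (\<forall>S w Fs Gs. finite S \<longrightarrow> (\<forall>s\<in>S. 0 \<le> w s) \<longrightarrow> sum w S = 1 \<longrightarrow>
      (\<forall>s\<in>S. P (Fs s) (Gs s)) \<longrightarrow> P (combF S w Fs) (combG S w Gs)) \<and>
     (\<forall>F G F' G'. agree m F G F' G' \<longrightarrow> P F G = P F' G')"

lemma goodfD1:
  assumes "goodf m h" "finite S" "sum w S = 1"
  shows "h (combF S w Fs) (combG S w Gs) = (\<Sum>s\<in>S. w s * h (Fs s) (Gs s))"
proof -
  have "\<forall>S w Fs Gs. finite S \<longrightarrow> sum w S = 1 \<longrightarrow>
      h (combF S w Fs) (combG S w Gs) = (\<Sum>s\<in>S. w s * h (Fs s) (Gs s))"
    using assms(1) unfolding goodf_def by (rule conjunct1)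
  then show ?thesis using assms(2,3) by auto
qed

lemma goodfD2:
  assumes "goodf m h" "agree m F G F' G'"
  shows "h F G = h F' G'"
proof -
  have "\<forall>F G F' G'. agree m F G F' G' \<longrightarrow> h F G = h F' G'"
    using assms(1) unfolding goodf_def by (rule conjunct2)
  then show ?thesis using assms(2) by auto
qed

lemma cvxpD1:
  assumes "cvxp m P" "finite S" "\<And>s. s\<in>S \<Longrightarrow> 0 \<le> w s" "sum w S = 1"
    "\<And>s. s\<in>S \<Longrightarrow> P (Fs s) (Gs s)"
  shows "P (combF S w Fs) (combG S w Gs)"
proof -
  have "\<forall>S w Fs Gs. finite S \<longrightarrow> (\<forall>s\<in>S. 0 \<le> w s) \<longrightarrow> sum w S = 1 \<longrightarrow>
      (\<forall>s\<in>S. P (Fs s) (Gs s)) \<longrightarrow> P (combF S w Fs) (combG S w Gs)"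
    using assms(1) unfolding cvxp_def by (rule conjunct1)
  then show ?thesis using assms(2-5) by auto
qed

lemma cvxpD2:
  assumes "cvxp m P" "agree m F G F' G'"
  shows "P F G = P F' G'"
proof -
  have "\<forall>F G F' G'. agree m F G F' G' \<longrightarrow> P F G = P F' G'"
    using assms(1) unfolding cvxp_def by (rule conjunct2)
  then show ?thesis using assms(2) by auto
qed

lemma good_ext: "goodf m h \<Longrightarrow> (\<And>F G. h' F G = h F G) \<Longrightarrow> goodf m h'"
proof -
  assume "goodf m h" "\<And>F G. h' F G = h F G"
  then have "h' = h" by (auto simp: fun_eq_iff)
  then show ?thesis using \<open>goodf m h\<close> by simp
qed

lemma good_const: "goodf m (\<lambda>F G. c)"
  unfolding goodf_def by (simp add: sum_distrib_right[symmetric])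

lemma good_add: "goodf m h1 \<Longrightarrow> goodf m h2 \<Longrightarrow> goodf m (\<lambda>F G. h1 F G + h2 F G)"
  unfolding goodf_def by (simp add: distrib_left sum.distrib)

lemma good_diff: "goodf m h1 \<Longrightarrow> goodf m h2 \<Longrightarrow> goodf m (\<lambda>F G. h1 F G - h2 F G)"
  unfolding goodf_def by (simp add: right_diff_distrib sum_subtractf)

lemma good_neg: "goodf m h1 \<Longrightarrow> goodf m (\<lambda>F G. - h1 F G)"
  unfolding goodf_def by (simp add: sum_negf)

lemma good_cmul: "goodf m h \<Longrightarrow> goodf m (\<lambda>F G. c * h F G)"
  unfolding goodf_def by (simp add: sum_distrib_left mult.left_commute)

lemma good_mulc: "goodf m h \<Longrightarrow> goodf m (\<lambda>F G. h F G * c)"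
proof -
  assume "goodf m h"
  then have "goodf m (\<lambda>F G. c * h F G)" by (rule good_cmul)
  then show ?thesis by (rule good_ext) (simp add: mult.commute)
qed

lemma good_div: "goodf m h \<Longrightarrow> goodf m (\<lambda>F G. h F G / c)"
  unfolding goodf_def by (simp add: sum_divide_distrib)

lemma swap1: "(\<Sum>k\<in>A. \<Sum>s\<in>S. f k s) = (\<Sum>s\<in>S. \<Sum>k\<in>A. f k s)"
  by (rule sum.swap)

lemma swap2: "(\<Sum>k\<in>A. \<Sum>l\<in>B. \<Sum>s\<in>S. f k l s) = (\<Sum>s\<in>S. \<Sum>k\<in>A. \<Sum>l\<in>B. f k l s)"
proof -
  have "(\<Sum>k\<in>A. \<Sum>l\<in>B. \<Sum>s\<in>S. f k l s) = (\<Sum>k\<in>A. \<Sum>s\<in>S. \<Sum>l\<in>B. f k l s)"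
    by (rule sum.cong[OF refl], rule sum.swap)
  also have "\<dots> = (\<Sum>s\<in>S. \<Sum>k\<in>A. \<Sum>l\<in>B. f k l s)" by (rule sum.swap)
  finally show ?thesis .
qed

lemma swap4: "(\<Sum>i\<in>I. \<Sum>j\<in>J. \<Sum>k\<in>A. \<Sum>l\<in>B. \<Sum>s\<in>S. f i j k l s) = (\<Sum>s\<in>S. \<Sum>i\<in>I. \<Sum>j\<in>J. \<Sum>k\<in>A. \<Sum>l\<in>B. f i j k l s)"
proof -
  have "(\<Sum>i\<in>I. \<Sum>j\<in>J. \<Sum>k\<in>A. \<Sum>l\<in>B. \<Sum>s\<in>S. f i j k l s) = (\<Sum>i\<in>I. \<Sum>j\<in>J. \<Sum>s\<in>S. \<Sum>k\<in>A. \<Sum>l\<in>B. f i j k l s)"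
    by (rule sum.cong[OF refl], rule sum.cong[OF refl], rule swap2)
  also have "\<dots> = (\<Sum>s\<in>S. \<Sum>i\<in>I. \<Sum>j\<in>J. \<Sum>k\<in>A. \<Sum>l\<in>B. f i j k l s)" by (rule swap2)
  finally show ?thesis .
qed

lemma good_sum:
  assumes "finite K" "\<And>k. k \<in> K \<Longrightarrow> goodf m (h k)"
  shows "goodf m (\<lambda>F G. \<Sum>k\<in>K. h k F G)"
  unfolding goodf_def
proof (intro conjI allI impI)
  fix S :: "(nat \<Rightarrow> nat) set" and w :: "(nat \<Rightarrow> nat) \<Rightarrow> real" and Fs Gs
  assume S: "finite S" "sum w S = 1"
  have "(\<Sum>k\<in>K. h k (combF S w Fs) (combG S w Gs)) = (\<Sum>k\<in>K. \<Sum>s\<in>S. w s * h k (Fs s) (Gs s))"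
    by (rule sum.cong[OF refl], rule goodfD1[OF assms(2)]) (auto simp: S)
  also have "\<dots> = (\<Sum>s\<in>S. w s * (\<Sum>k\<in>K. h k (Fs s) (Gs s)))"
    unfolding sum_distrib_left by (rule swap1)
  finally show "(\<Sum>k\<in>K. h k (combF S w Fs) (combG S w Gs)) = (\<Sum>s\<in>S. w s * (\<Sum>k\<in>K. h k (Fs s) (Gs s)))" .
next
  fix F G F' G' assume ag: "agree m F G F' G'"
  show "(\<Sum>k\<in>K. h k F G) = (\<Sum>k\<in>K. h k F' G')"
    by (rule sum.cong[OF refl], rule goodfD2[OF assms(2)]) (auto simp: ag)
qed

lemma good_F: "i < m \<Longrightarrow> goodf m (\<lambda>F G. F i a)"
  unfolding goodf_def agree_def combF_def by simp

lemma good_G: "i < m \<Longrightarrow> j < m \<Longrightarrow> goodf m (\<lambda>F G. G i j a b)"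
  unfolding goodf_def agree_def combG_def by simp

lemma cvx_eq: "goodf m h1 \<Longrightarrow> goodf m h2 \<Longrightarrow> cvxp m (\<lambda>F G. h1 F G = h2 F G)"
  unfolding cvxp_def
  apply (intro conjI allI impI)
   apply (simp add: goodfD1)
  apply (simp add: goodfD2)
  done

lemma cvx_ext: "cvxp m P \<Longrightarrow> (\<And>F G. P' F G = P F G) \<Longrightarrow> cvxp m P'"
proof -
  assume "cvxp m P" "\<And>F G. P' F G = P F G"
  then have "P' = P" by (auto simp: fun_eq_iff)
  then show ?thesis using \<open>cvxp m P\<close> by simp
qed

lemma cvx_conj:
  assumes "cvxp m P" "cvxp m Q"
  shows "cvxp m (\<lambda>F G. P F G \<and> Q F G)"
  unfolding cvxp_def
proof (intro conjI allI impI)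
  fix S :: "(nat \<Rightarrow> nat) set" and w :: "(nat \<Rightarrow> nat) \<Rightarrow> real" and Fs Gs
  assume S: "finite S" "\<forall>s\<in>S. 0 \<le> w s" "sum w S = 1" "\<forall>s\<in>S. P (Fs s) (Gs s) \<and> Q (Fs s) (Gs s)"
  show "P (combF S w Fs) (combG S w Gs)"
    by (rule cvxpD1[OF assms(1) S(1) _ S(3)]) (use S in auto)
  show "Q (combF S w Fs) (combG S w Gs)"
    by (rule cvxpD1[OF assms(2) S(1) _ S(3)]) (use S in auto)
next
  fix F G F' G' assume ag: "agree m F G F' G'"
  show "(P F G \<and> Q F G) = (P F' G' \<and> Q F' G')"
    using cvxpD2[OF assms(1) ag] cvxpD2[OF assms(2) ag] by simp
qed

lemma cvx_all:
  assumes "\<And>x. cvxp m (P x)"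
  shows "cvxp m (\<lambda>F G. \<forall>x. P x F G)"
  unfolding cvxp_def
proof (intro conjI allI impI)
  fix S :: "(nat \<Rightarrow> nat) set" and w :: "(nat \<Rightarrow> nat) \<Rightarrow> real" and Fs Gs x
  assume S: "finite S" "\<forall>s\<in>S. 0 \<le> w s" "sum w S = 1" "\<forall>s\<in>S. \<forall>x. P x (Fs s) (Gs s)"
  show "P x (combF S w Fs) (combG S w Gs)"
    by (rule cvxpD1[OF assms S(1) _ S(3)]) (use S in auto)
next
  fix F G F' G' assume ag: "agree m F G F' G'"
  show "(\<forall>x. P x F G) = (\<forall>x. P x F' G')"
    using cvxpD2[OF assms ag] by simp
qed

lemma cvx_imp:
  assumes "Q \<Longrightarrow> cvxp m P"
  shows "cvxp m (\<lambda>F G. Q \<longrightarrow> P F G)"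
proof (cases Q)
  case True
  then have "cvxp m P" by (rule assms)
  then show ?thesis by (rule cvx_ext) (simp add: True)
next
  case False
  show ?thesis unfolding cvxp_def by (simp add: False)
qed

lemma psd_mat_cong: "(\<And>k l. k < K \<Longrightarrow> l < K \<Longrightarrow> M k l = M' k l) \<Longrightarrow> psd_mat K M = psd_mat K M'"
proof -
  assume h: "\<And>k l. k < K \<Longrightarrow> l < K \<Longrightarrow> M k l = M' k l"
  have "\<And>v. (\<Sum>k<K. \<Sum>l<K. v k * M k l * v l) = (\<Sum>k<K. \<Sum>l<K. v k * M' k l * v l)"
    using h by (intro sum.cong refl) auto
  moreover have "(\<forall>k<K. \<forall>l<K. M k l = M l k) = (\<forall>k<K. \<forall>l<K. M' k l = M' l k)"
    using h by auto
  ultimately show ?thesis unfolding psd_mat_def by simp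
qed

lemma lin_comb: "(x::real) * (\<Sum>s\<in>S. w s * g s) * y = (\<Sum>s\<in>S. w s * (x * g s * y))"
  by (simp add: sum_distrib_left sum_distrib_right mult_ac)

lemma psd_mat_comb:
  assumes "finite S" "\<And>s. s \<in> S \<Longrightarrow> 0 \<le> w s" "\<And>s. s \<in> S \<Longrightarrow> psd_mat K (Ms s)"
  shows "psd_mat K (\<lambda>k l. \<Sum>s\<in>S. w s * Ms s k l)"
  unfolding psd_mat_def
proof (intro conjI allI impI)
  fix k l assume "k < K" "l < K"
  then show "(\<Sum>s\<in>S. w s * Ms s k l) = (\<Sum>s\<in>S. w s * Ms s l k)"
    using assms(3) unfolding psd_mat_def by (intro sum.cong refl) auto
next
  fix v :: "nat \<Rightarrow> real"
  have "(\<Sum>k<K. \<Sum>l<K. v k * (\<Sum>s\<in>S. w s * Ms s k l) * v l)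
      = (\<Sum>k<K. \<Sum>l<K. \<Sum>s\<in>S. w s * (v k * Ms s k l * v l))"
    by (simp only: lin_comb)
  also have "\<dots> = (\<Sum>s\<in>S. w s * (\<Sum>k<K. \<Sum>l<K. v k * Ms s k l * v l))"
    unfolding sum_distrib_left by (rule swap2)
  also have "\<dots> \<ge> 0"
    using assms unfolding psd_mat_def by (auto intro!: sum_nonneg)
  finally show "0 \<le> (\<Sum>k<K. \<Sum>l<K. v k * (\<Sum>s\<in>S. w s * Ms s k l) * v l)" .
qed

lemma cvx_psd:
  assumes "\<And>k l. k < K \<Longrightarrow> l < K \<Longrightarrow> goodf m (M k l)"
  shows "cvxp m (\<lambda>F G. psd_mat K (\<lambda>k l. M k l F G))"
  unfolding cvxp_def
proof (intro conjI allI impI)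
  fix S :: "(nat \<Rightarrow> nat) set" and w :: "(nat \<Rightarrow> nat) \<Rightarrow> real" and Fs Gs
  assume S: "finite S" "\<forall>s\<in>S. 0 \<le> w s" "sum w S = 1" "\<forall>s\<in>S. psd_mat K (\<lambda>k l. M k l (Fs s) (Gs s))"
  have "psd_mat K (\<lambda>k l. M k l (combF S w Fs) (combG S w Gs)) =
        psd_mat K (\<lambda>k l. \<Sum>s\<in>S. w s * M k l (Fs s) (Gs s))"
  proof (rule psd_mat_cong)
    fix k l assume "k < K" "l < K"
    show "M k l (combF S w Fs) (combG S w Gs) = (\<Sum>s\<in>S. w s * M k l (Fs s) (Gs s))"
      by (rule goodfD1[OF assms[OF \<open>k < K\<close> \<open>l < K\<close>] S(1) S(3)])
  qed
  also have "\<dots>" using S by (intro psd_mat_comb) auto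
  finally show "psd_mat K (\<lambda>k l. M k l (combF S w Fs) (combG S w Gs))" .
next
  fix F G F' G' assume ag: "agree m F G F' G'"
  show "psd_mat K (\<lambda>k l. M k l F G) = psd_mat K (\<lambda>k l. M k l F' G')"
  proof (rule psd_mat_cong)
    fix k l assume "k < K" "l < K"
    show "M k l F G = M k l F' G'"
      by (rule goodfD2[OF assms[OF \<open>k < K\<close> \<open>l < K\<close>] ag])
  qed
qed

lemma cvx_psd_gram: "cvxp m (\<lambda>F G. psd_gram m p G)"
  unfolding cvxp_def
proof (intro conjI allI impI)
  fix S :: "(nat \<Rightarrow> nat) set" and w :: "(nat \<Rightarrow> nat) \<Rightarrow> real" and Fs Gs
  assume S: "finite S" "\<forall>s\<in>S. 0 \<le> w s" "sum w S = 1" "\<forall>s\<in>S. psd_gram m p (Gs s)"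
  show "psd_gram m p (combG S w Gs)"
    unfolding psd_gram_def
  proof (intro conjI allI impI)
    fix i j a b assume "i < m" "j < m" "a < p" "b < p"
    then show "combG S w Gs i j a b = combG S w Gs j i b a"
      using S unfolding psd_gram_def combG_def by (auto intro: sum.cong)
  next
    fix v :: "nat \<Rightarrow> nat \<Rightarrow> real"
    have "(\<Sum>i<m. \<Sum>j<m. \<Sum>a<p. \<Sum>b<p. v i a * combG S w Gs i j a b * v j b)
       = (\<Sum>i<m. \<Sum>j<m. \<Sum>a<p. \<Sum>b<p. \<Sum>s\<in>S. w s * (v i a * Gs s i j a b * v j b))"
      unfolding combG_def by (simp only: lin_comb)
    also have "\<dots> = (\<Sum>s\<in>S. w s * (\<Sum>i<m. \<Sum>j<m. \<Sum>a<p. \<Sum>b<p. v i a * Gs s i j a b * v j b))"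
      unfolding sum_distrib_left by (rule swap4)
    also have "\<dots> \<ge> 0"
      using S unfolding psd_gram_def by (auto intro!: sum_nonneg)
    finally show "0 \<le> (\<Sum>i<m. \<Sum>j<m. \<Sum>a<p. \<Sum>b<p. v i a * combG S w Gs i j a b * v j b)" .
  qed
next
  fix F G F' G' assume h: "agree m F G F' G'"
  show "psd_gram m p G = psd_gram m p G'"
  proof -
    have "\<And>v. (\<Sum>i<m. \<Sum>j<m. \<Sum>a<p. \<Sum>b<p. v i a * G i j a b * v j b) = (\<Sum>i<m. \<Sum>j<m. \<Sum>a<p. \<Sum>b<p. v i a * G' i j a b * v j b)"
      using h unfolding agree_def by (intro sum.cong refl) auto
    moreover have "(\<forall>i<m. \<forall>j<m. \<forall>a<p. \<forall>b<p. G i j a b = G j i b a) = (\<forall>i<m. \<forall>j<m. \<forall>a<p. \<forall>b<p. G' i j a b = G' j i b a)"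
      using h unfolding agree_def by auto
    ultimately show ?thesis unfolding psd_gram_def by simp
  qed
qed

lemma cvx_ball:
  assumes "\<And>x. x \<in> A \<Longrightarrow> cvxp m (P x)"
  shows "cvxp m (\<lambda>F G. \<forall>x\<in>A. P x F G)"
proof -
  have "cvxp m (\<lambda>F G. \<forall>x. x \<in> A \<longrightarrow> P x F G)"
    by (intro cvx_all cvx_imp assms)
  then show ?thesis by (rule cvx_ext) auto
qed

lemma cvx_true: "cvxp m (\<lambda>F G. True)"
  unfolding cvxp_def by simp

lemmas good_intros = good_add good_diff good_neg good_cmul good_mulc good_div good_const
   good_sum[OF finite_lessThan] good_F good_G

lemma good_sa_eval: "i < m \<Longrightarrow> goodf m (\<lambda>F G. sa_eval p q e F G i)"
  unfolding sa_eval_def by (intro good_intros; simp)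

lemma good_avg_inner: "goodf m (\<lambda>F G. avg_inner m G a b)"
  unfolding avg_inner_def by (intro good_intros; simp)

lemma good_avgF: "goodf m (\<lambda>F G. avgF m F a)"
  unfolding avgF_def by (intro good_intros; simp)

lemma good_avgD: "goodf m (\<lambda>F G. avgD m G a b)"
  unfolding avgD_def by (intro good_intros; simp)

lemma good_perpG: "goodf m (\<lambda>F G. perpG m G a b)"
  unfolding perpG_def by (intro good_intros; simp)

lemma good_si_eval: "goodf m (\<lambda>F G. si_eval m p q e F G)"
  unfolding si_eval_def
  by (intro good_intros good_avg_inner good_avgF good_avgD; simp)

lemma good_gram_affine:
  assumes "gram_affine n p q h"
  shows "goodf n h"
proof -
  from assms obtain c0 cF cG where h: "\<forall>F G. h F G = c0 + (\<Sum>i<n. \<Sum>a<q. cF i a * F i a)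
      + (\<Sum>i<n. \<Sum>j<n. \<Sum>a<p. \<Sum>b<p. cG i j a b * G i j a b)"
    unfolding gram_affine_def by blast
  have "goodf n (\<lambda>F G. c0 + (\<Sum>i<n. \<Sum>a<q. cF i a * F i a)
      + (\<Sum>i<n. \<Sum>j<n. \<Sum>a<p. \<Sum>b<p. cG i j a b * G i j a b))"
    by (intro good_intros; simp)
  then show ?thesis by (rule good_ext) (simp add: h)
qed

lemma cvx_consensus: "cvxp m (\<lambda>F G. consensus_holds m lm lp blk G)"
  unfolding consensus_holds_def Let_def
  by (intro cvx_conj cvx_all cvx_imp cvx_eq cvx_psd good_intros good_avg_inner good_perpG)

lemma cvx_sa_holds: "i < m \<Longrightarrow> cvxp m (\<lambda>F G. sa_holds p q c F G i)"
  unfolding sa_holds_def by (intro cvx_psd good_sa_eval)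

lemma cvx_si_holds: "cvxp m (\<lambda>F G. si_holds m p q c F G)"
  unfolding si_holds_def by (intro cvx_psd good_si_eval)

lemma cvx_feasible: "cvxp m Init \<Longrightarrow> cvxp m (pep_feasible m D Init)"
  unfolding pep_feasible_def
  apply (intro cvx_conj)
  apply (rule cvx_psd_gram)
  apply (intro cvx_all cvx_imp cvx_ball cvx_sa_holds; assumption)
  apply (intro cvx_all cvx_imp cvx_ball cvx_eq good_intros; assumption)
  apply (intro cvx_eq good_intros good_avg_inner)
  apply (intro cvx_ball cvx_consensus)
  apply assumption
  done

lemma cvx_lmi: "lmi_representable n p q Init \<Longrightarrow> cvxp n Init"
proof -
  assume "lmi_representable n p q Init"
  then obtain cs :: "(nat \<times> (nat \<Rightarrow> nat \<Rightarrow> fvals \<Rightarrow> gram \<Rightarrow> real)) list" where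
    cs: "\<forall>(m, M) \<in> set cs. \<forall>k<m. \<forall>l<m. gram_affine n p q (M k l)"
        "\<forall>F G. Init F G \<longleftrightarrow> (\<forall>(m, M) \<in> set cs. psd_mat m (\<lambda>k l. M k l F G))"
    unfolding lmi_representable_def by blast
  have "cvxp n (\<lambda>F G. \<forall>x\<in>set cs. psd_mat (fst x) (\<lambda>k l. snd x k l F G))"
  proof (intro cvx_ball cvx_psd good_gram_affine)
    fix x k l assume "x \<in> set cs" "k < fst x" "l < fst x"
    then show "gram_affine n p q (snd x k l)" using cs(1) by fastforce
  qed
  then show ?thesis
    by (rule cvx_ext) (use cs(2) in \<open>auto simp: case_prod_beta\<close>)
qed

definition permF :: "(nat \<Rightarrow> nat) \<Rightarrow> fvals \<Rightarrow> fvals" where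
  "permF \<sigma> F = (\<lambda>i. F (\<sigma> i))"
definition permG :: "(nat \<Rightarrow> nat) \<Rightarrow> gram \<Rightarrow> gram" where
  "permG \<sigma> G = (\<lambda>i j. G (\<sigma> i) (\<sigma> j))"

lemma sum_perm: "\<sigma> permutes {..<m} \<Longrightarrow> (\<Sum>i<m. f (\<sigma> i)) = (\<Sum>i<m. f i)"
  using sum.permute[of \<sigma> "{..<m}" f] by (simp add: o_def)

lemma sum_perm2: "\<sigma> permutes {..<m} \<Longrightarrow> (\<Sum>i<m. \<Sum>j<m. f (\<sigma> i) (\<sigma> j)) = (\<Sum>i<m. \<Sum>j<m. f i j)"
proof -
  assume s: "\<sigma> permutes {..<m}"
  have "(\<Sum>i<m. \<Sum>j<m. f (\<sigma> i) (\<sigma> j)) = (\<Sum>i<m. \<Sum>j<m. f (\<sigma> i) j)"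
    by (rule sum.cong[OF refl], rule sum_perm[OF s])
  also have "\<dots> = (\<Sum>i<m. \<Sum>j<m. f i j)"
    by (rule sum_perm[OF s, where f = "\<lambda>i. \<Sum>j<m. f i j"])
  finally show ?thesis .
qed

lemma psd_gram_perm:
  assumes s: "\<sigma> permutes {..<m}" and G: "psd_gram m p G"
  shows "psd_gram m p (permG \<sigma> G)"
  unfolding psd_gram_def
proof (intro conjI allI impI)
  fix i j a b assume "i < m" "j < m" "a < p" "b < p"
  then show "permG \<sigma> G i j a b = permG \<sigma> G j i b a"
    using G permutes_in_image[OF s] unfolding psd_gram_def permG_def by auto
next
  fix v :: "nat \<Rightarrow> nat \<Rightarrow> real"
  define v' where "v' = (\<lambda>i. v (inv \<sigma> i))"
  have vv: "v' (\<sigma> i) = v i" for i unfolding v'_def using permutes_inverses(2)[OF s] by simp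
  define g where "g = (\<lambda>i j. \<Sum>a<p. \<Sum>b<p. v' i a * G i j a b * v' j b)"
  have "(\<Sum>i<m. \<Sum>j<m. \<Sum>a<p. \<Sum>b<p. v i a * permG \<sigma> G i j a b * v j b)
      = (\<Sum>i<m. \<Sum>j<m. g (\<sigma> i) (\<sigma> j))"
    unfolding g_def permG_def vv ..
  also have "\<dots> = (\<Sum>i<m. \<Sum>j<m. g i j)" by (rule sum_perm2[OF s])
  also have "\<dots> \<ge> 0" using G unfolding psd_gram_def g_def by blast
  finally show "0 \<le> (\<Sum>i<m. \<Sum>j<m. \<Sum>a<p. \<Sum>b<p. v i a * permG \<sigma> G i j a b * v j b)" .
qed

lemma sa_holds_perm: "sa_holds p q c (permF \<sigma> F) (permG \<sigma> G) i = sa_holds p q c F G (\<sigma> i)"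
  by (simp add: sa_holds_def sa_eval_def permF_def permG_def)

lemma avg_inner_perm: "\<sigma> permutes {..<m} \<Longrightarrow> avg_inner m (permG \<sigma> G) a b = avg_inner m G a b"
  unfolding avg_inner_def permG_def by (simp add: sum_perm2[where f = "\<lambda>i j. G i j a b"])

lemma perpG_perm: "\<sigma> permutes {..<m} \<Longrightarrow> perpG m (permG \<sigma> G) a b = perpG m G a b"
  unfolding perpG_def permG_def
  by (simp add: sum_perm2[where f = "\<lambda>i j. G i j a b"] sum_perm[where f = "\<lambda>i. G i i a b"])

lemma avgF_perm: "\<sigma> permutes {..<m} \<Longrightarrow> avgF m (permF \<sigma> F) a = avgF m F a"
  unfolding avgF_def permF_def by (simp add: sum_perm[where f = "\<lambda>i. F i a"])

lemma avgD_perm: "\<sigma> permutes {..<m} \<Longrightarrow> avgD m (permG \<sigma> G) a b = avgD m G a b"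
  unfolding avgD_def permG_def by (simp add: sum_perm[where f = "\<lambda>i. G i i a b"])

lemma consensus_perm: "\<sigma> permutes {..<m} \<Longrightarrow>
    consensus_holds m lm lp blk (permG \<sigma> G) = consensus_holds m lm lp blk G"
  unfolding consensus_holds_def Let_def by (simp add: avg_inner_perm perpG_perm)

lemma si_eval_perm: "\<sigma> permutes {..<m} \<Longrightarrow>
    si_eval m p q e (permF \<sigma> F) (permG \<sigma> G) = si_eval m p q e F G"
  unfolding si_eval_def by (simp add: avg_inner_perm avgF_perm avgD_perm)

lemma si_holds_perm: "\<sigma> permutes {..<m} \<Longrightarrow>
    si_holds m p q c (permF \<sigma> F) (permG \<sigma> G) = si_holds m p q c F G"
  unfolding si_holds_def by (simp add: si_eval_perm)

lemma feas_perm: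
  assumes s: "\<sigma> permutes {..<m}"
    and I: "\<And>F G. Init F G \<Longrightarrow> Init (permF \<sigma> F) (permG \<sigma> G)"
    and f: "pep_feasible m D Init F G"
  shows "pep_feasible m D Init (permF \<sigma> F) (permG \<sigma> G)"
proof -
  have im: "\<And>i. i < m \<Longrightarrow> \<sigma> i < m" using permutes_in_image[OF s] by auto
  show ?thesis
    using f unfolding pep_feasible_def
    apply (simp add: psd_gram_perm[OF s] sa_holds_perm avg_inner_perm[OF s] consensus_perm[OF s] I im)
    apply (simp add: permG_def im)
    done
qed

lemma equiv_perm:
  assumes eq: "agents_equivalent n D Init Perf" and s: "\<sigma> permutes {..<n}"
  shows "\<forall>F G. pep_feasible n D Init F G \<longrightarrow> pep_feasible n D Init (permF \<sigma> F) (permG \<sigma> G)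
            \<and> Perf (permF \<sigma> F) (permG \<sigma> G) = Perf F G"
  using s finite_lessThan[of n]
proof (induction rule: permutes_induct)
  case id
  then show ?case by (simp add: permF_def permG_def)
next
  case (swap a b p)
  show ?case
  proof (intro allI impI)
    fix F G assume f: "pep_feasible n D Init F G"
    have e1: "permF (transpose a b \<circ> p) F = permF p (swapF a b F)"
      by (simp add: permF_def swapF_def fun_eq_iff)
    have e2: "permG (transpose a b \<circ> p) G = permG p (swapG a b G)"
      by (simp add: permG_def swapG_def fun_eq_iff)
    have ab: "a < n" "b < n" using swap.hyps by auto
    have sw: "pep_feasible n D Init (swapF a b F) (swapG a b G)"
        "Perf (swapF a b F) (swapG a b G) = Perf F G"
      using eq f ab unfolding agents_equivalent_def by blast+
    show "pep_feasible n D Init (permF (transpose a b \<circ> p) F) (permG (transpose a b \<circ> p) G)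
            \<and> Perf (permF (transpose a b \<circ> p) F) (permG (transpose a b \<circ> p) G) = Perf F G"
      unfolding e1 e2 using swap.IH sw by simp
  qed
qed

lemma perm_exists2:
  assumes "k \<noteq> l" "i \<noteq> j" "k < m" "l < m" "i < m" "j < m"
  shows "\<exists>\<tau>. \<tau> permutes {..<m} \<and> \<tau> k = i \<and> \<tau> l = j"
proof -
  define l' where "l' = transpose k i l"
  have l'm: "l' < m" using assms unfolding l'_def by (auto simp: transpose_def)
  have l'i: "l' \<noteq> i" using assms unfolding l'_def by (auto simp: transpose_def)
  define \<tau> where "\<tau> = transpose l' j \<circ> transpose k i"
  have "\<tau> permutes {..<m}" unfolding \<tau>_def
    by (intro permutes_compose permutes_swap_id) (use assms l'm in auto)
  moreover have "\<tau> k = i" unfolding \<tau>_def using l'i assms by (auto simp: transpose_def)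
  moreover have "\<tau> l = j" unfolding \<tau>_def l'_def by (simp add: transpose_def)
  ultimately show ?thesis by blast
qed

lemma sym_main:
  assumes m: "m \<ge> 2" and cI: "cvxp m Init" and gP: "goodf m Perf"
    and inv: "\<And>\<sigma> F G. \<sigma> permutes {..<m} \<Longrightarrow> pep_feasible m D Init F G \<Longrightarrow>
        pep_feasible m D Init (permF \<sigma> F) (permG \<sigma> G) \<and> Perf (permF \<sigma> F) (permG \<sigma> G) = Perf F G"
    and feas: "pep_feasible m D Init F G"
  shows "\<exists>fA GA GC. pep_feasible m D Init (symF fA) (symG GA GC) \<and> Perf (symF fA) (symG GA GC) = Perf F G"
proof -
  define S where "S = {\<sigma>. \<sigma> permutes {..<m}}"
  have finS: "finite S" unfolding S_def by (rule finite_permutations) simp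
  have "id \<in> S" unfolding S_def by simp
  then have cS: "card S > 0" using finS card_gt_0_iff by blast
  define w :: "(nat \<Rightarrow> nat) \<Rightarrow> real" where "w = (\<lambda>_. 1 / real (card S))"
  have w1: "sum w S = 1" unfolding w_def using cS by simp
  have w0: "\<And>s. s \<in> S \<Longrightarrow> 0 \<le> w s" unfolding w_def by simp
  define F' where "F' = combF S w (\<lambda>\<sigma>. permF \<sigma> F)"
  define G' where "G' = combG S w (\<lambda>\<sigma>. permG \<sigma> G)"
  have feas': "pep_feasible m D Init F' G'"
    unfolding F'_def G'_def
    by (rule cvxpD1[OF cvx_feasible[OF cI] finS w0 w1]) (use inv feas in \<open>auto simp: S_def\<close>)
  have "Perf F' G' = (\<Sum>s\<in>S. w s * Perf (permF s F) (permG s G))"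
    unfolding F'_def G'_def by (rule goodfD1[OF gP finS w1])
  also have "\<dots> = (\<Sum>s\<in>S. w s * Perf F G)"
    by (rule sum.cong[OF refl]) (use inv feas in \<open>auto simp: S_def\<close>)
  also have "\<dots> = Perf F G" using w1 by (simp add: sum_distrib_right[symmetric])
  finally have perf': "Perf F' G' = Perf F G" .
  have invF: "F' (\<tau> i) = F' i" if t: "\<tau> permutes {..<m}" for \<tau> i
  proof
    fix a
    have "F' i a = (\<Sum>\<sigma>\<in>S. w \<sigma> * F (\<sigma> i) a)" unfolding F'_def combF_def permF_def ..
    also have "\<dots> = (\<Sum>\<sigma>\<in>S. w (\<sigma> \<circ> \<tau>) * F ((\<sigma> \<circ> \<tau>) i) a)"
      unfolding S_def by (rule sum_permutations_compose_right[OF t])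
    also have "\<dots> = F' (\<tau> i) a" unfolding F'_def combF_def permF_def w_def by simp
    finally show "F' (\<tau> i) a = F' i a" by simp
  qed
  have invG: "G' (\<tau> i) (\<tau> j) = G' i j" if t: "\<tau> permutes {..<m}" for \<tau> i j
  proof (intro ext)
    fix a b
    have "G' i j a b = (\<Sum>\<sigma>\<in>S. w \<sigma> * G (\<sigma> i) (\<sigma> j) a b)" unfolding G'_def combG_def permG_def ..
    also have "\<dots> = (\<Sum>\<sigma>\<in>S. w (\<sigma> \<circ> \<tau>) * G ((\<sigma> \<circ> \<tau>) i) ((\<sigma> \<circ> \<tau>) j) a b)"
      unfolding S_def by (rule sum_permutations_compose_right[OF t])
    also have "\<dots> = G' (\<tau> i) (\<tau> j) a b" unfolding G'_def combG_def permG_def w_def by simp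
    finally show "G' (\<tau> i) (\<tau> j) a b = G' i j a b" by simp
  qed
  define fA where "fA = F' 0"
  define GA where "GA = G' 0 0"
  define GC where "GC = G' 0 1"
  have m0: "0 < m" and m1: "1 < m" using m by auto
  have ag: "agree m (symF fA) (symG GA GC) F' G'"
    unfolding agree_def
  proof (intro conjI allI impI)
    fix i assume i: "i < m"
    have t: "transpose 0 i permutes {..<m}" using i m0 by (intro permutes_swap_id) auto
    show "symF fA i = F' i" unfolding symF_def fA_def using invF[OF t, of 0] by simp
  next
    fix i j assume i: "i < m" and j: "j < m"
    show "symG GA GC i j = G' i j"
    proof (cases "i = j")
      case True
      have t: "transpose 0 i permutes {..<m}" using i m0 by (intro permutes_swap_id) auto
      show ?thesis unfolding symG_def GA_def using True invG[OF t, of 0 0] by simp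
    next
      case False
      obtain \<tau> where t: "\<tau> permutes {..<m}" "\<tau> 0 = i" "\<tau> 1 = j"
        using perm_exists2[of 0 1 i j m] False i j m0 m1 by auto
      show ?thesis unfolding symG_def GC_def using False invG[OF t(1), of 0 1] t by simp
    qed
  qed
  have "pep_feasible m D Init (symF fA) (symG GA GC)"
    using cvxpD2[OF cvx_feasible[OF cI] ag] feas' by simp
  moreover have "Perf (symF fA) (symG GA GC) = Perf F G"
    using goodfD2[OF gP ag] perf' by simp
  ultimately show ?thesis by blast
qed

lemma value_main:
  assumes m: "m \<ge> 2" and cI: "cvxp m Init" and gP: "goodf m Perf"
    and inv: "\<And>\<sigma> F G. \<sigma> permutes {..<m} \<Longrightarrow> pep_feasible m D Init F G \<Longrightarrow>
        pep_feasible m D Init (permF \<sigma> F) (permG \<sigma> G) \<and> Perf (permF \<sigma> F) (permG \<sigma> G) = Perf F G"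
  shows "pep_value m D Init Perf = reduced_value m D Init Perf"
  unfolding pep_value_def reduced_value_def
proof (rule SUP_eq)
  fix FG assume "FG \<in> {(F, G). pep_feasible m D Init F G}"
  then have f: "pep_feasible m D Init (fst FG) (snd FG)" by auto
  obtain fA GA GC where "pep_feasible m D Init (symF fA) (symG GA GC)"
      "Perf (symF fA) (symG GA GC) = Perf (fst FG) (snd FG)"
    using sym_main[OF m cI gP inv f] by blast
  then show "\<exists>X\<in>{(fA, GA, GC). pep_feasible m D Init (symF fA) (symG GA GC)}.
     ereal (Perf (fst FG) (snd FG)) \<le> ereal (Perf (symF (fst X)) (symG (fst (snd X)) (snd (snd X))))"
    by (intro bexI[of _ "(fA, GA, GC)"]) auto
next
  fix X assume "X \<in> {(fA, GA, GC). pep_feasible m D Init (symF fA) (symG GA GC)}"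
  then show "\<exists>FG\<in>{(F, G). pep_feasible m D Init F G}.
      ereal (Perf (symF (fst X)) (symG (fst (snd X)) (snd (snd X)))) \<le> ereal (Perf (fst FG) (snd FG))"
    by (intro bexI[of _ "(symF (fst X), symG (fst (snd X)) (snd (snd X)))"]) auto
qed

definition bf :: "nat \<Rightarrow> (nat \<Rightarrow> nat \<Rightarrow> real) \<Rightarrow> (nat \<Rightarrow> real) \<Rightarrow> (nat \<Rightarrow> real) \<Rightarrow> real" where
  "bf p M x y = (\<Sum>a<p. \<Sum>b<p. x a * M a b * y b)"

lemma bf_sum_left: "finite I \<Longrightarrow> bf p M (\<lambda>a. \<Sum>i\<in>I. x i a) y = (\<Sum>i\<in>I. bf p M (x i) y)"
proof -
  assume "finite I"
  have "bf p M (\<lambda>a. \<Sum>i\<in>I. x i a) y = (\<Sum>a<p. \<Sum>b<p. \<Sum>i\<in>I. x i a * M a b * y b)"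
    unfolding bf_def by (simp add: sum_distrib_right)
  also have "\<dots> = (\<Sum>i\<in>I. bf p M (x i) y)" unfolding bf_def by (rule swap2)
  finally show ?thesis .
qed

lemma bf_sum_right: "finite I \<Longrightarrow> bf p M y (\<lambda>a. \<Sum>i\<in>I. x i a) = (\<Sum>i\<in>I. bf p M y (x i))"
proof -
  assume "finite I"
  have "bf p M y (\<lambda>a. \<Sum>i\<in>I. x i a) = (\<Sum>a<p. \<Sum>b<p. \<Sum>i\<in>I. y a * M a b * x i b)"
    unfolding bf_def by (simp add: sum_distrib_left)
  also have "\<dots> = (\<Sum>i\<in>I. bf p M y (x i))" unfolding bf_def by (rule swap2)
  finally show ?thesis .
qed

lemma bf_scale_left: "bf p M (\<lambda>a. c * x a) y = c * bf p M x y"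
  unfolding bf_def by (simp add: sum_distrib_left mult_ac)

lemma bf_scale_right: "bf p M y (\<lambda>a. c * x a) = c * bf p M y x"
  unfolding bf_def by (simp add: sum_distrib_left mult_ac)

lemma bf_diff_left: "bf p M (\<lambda>a. x a - z a) y = bf p M x y - bf p M z y"
  unfolding bf_def by (simp add: left_diff_distrib sum_subtractf)

lemma bf_diff_right: "bf p M y (\<lambda>a. x a - z a) = bf p M y x - bf p M y z"
  unfolding bf_def by (simp add: right_diff_distrib sum_subtractf)

lemma bf_neg_left: "bf p M (\<lambda>a. - x a) y = - bf p M x y"
  unfolding bf_def by (simp add: sum_negf)

lemma bf_neg_right: "bf p M y (\<lambda>a. - x a) = - bf p M y x"
  unfolding bf_def by (simp add: sum_negf)

lemma bf_zero_left: "bf p M (\<lambda>a. 0) y = 0"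
  unfolding bf_def by simp

lemma bf_mat_add: "bf p (\<lambda>a b. M a b + c * N a b) x y = bf p M x y + c * bf p N x y"
  unfolding bf_def by (simp add: distrib_left distrib_right sum.distrib sum_distrib_left mult_ac)

lemma bf_mat_diff: "bf p (\<lambda>a b. M a b - N a b) x y = bf p M x y - bf p N x y"
  unfolding bf_def by (simp add: right_diff_distrib left_diff_distrib sum_subtractf)

lemma psd_mat_bf: "psd_mat p M \<Longrightarrow> 0 \<le> bf p M x x"
  unfolding psd_mat_def bf_def by blast

lemma psd_mat_iff_bf: "psd_mat p M \<longleftrightarrow> (\<forall>a<p. \<forall>b<p. M a b = M b a) \<and> (\<forall>x. 0 \<le> bf p M x x)"
  unfolding psd_mat_def bf_def by blast

lemma swap_4: "(\<Sum>i\<in>I. \<Sum>j\<in>J. \<Sum>a\<in>A. \<Sum>b\<in>B. f i j a b) = (\<Sum>a\<in>A. \<Sum>b\<in>B. \<Sum>i\<in>I. \<Sum>j\<in>J. f i j a b)"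
proof -
  have "(\<Sum>i\<in>I. \<Sum>j\<in>J. \<Sum>a\<in>A. \<Sum>b\<in>B. f i j a b) = (\<Sum>i\<in>I. \<Sum>a\<in>A. \<Sum>b\<in>B. \<Sum>j\<in>J. f i j a b)"
    by (rule sum.cong[OF refl], rule swap2[symmetric])
  also have "\<dots> = (\<Sum>a\<in>A. \<Sum>b\<in>B. \<Sum>i\<in>I. \<Sum>j\<in>J. f i j a b)" by (rule swap2[symmetric])
  finally show ?thesis .
qed

lemma Q_sym:
  "(\<Sum>i<n. \<Sum>j<n. \<Sum>a<p. \<Sum>b<p. v i a * symG GA GC i j a b * v j b)
   = (\<Sum>i<n. bf p (\<lambda>a b. GA a b - GC a b) (v i) (v i)) + bf p GC (\<lambda>a. \<Sum>i<n. v i a) (\<lambda>a. \<Sum>i<n. v i a)"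
proof -
  have s1: "(\<Sum>a<p. \<Sum>b<p. v i a * symG GA GC i j a b * v j b) =
     (if i = j then bf p (\<lambda>a b. GA a b - GC a b) (v i) (v i) else 0) + (\<Sum>a<p. \<Sum>b<p. v i a * GC a b * v j b)"
    for i j
  proof (cases "i = j")
    case True
    have e: "x a * GA a b * x b = x a * (GA a b - GC a b) * x b + x a * GC a b * x b" for x :: "nat \<Rightarrow> real" and a b
      by (simp add: algebra_simps)
    show ?thesis unfolding True symG_def bf_def by (simp add: e sum.distrib)
  next
    case False
    then show ?thesis unfolding symG_def by simp
  qed
  have "(\<Sum>i<n. \<Sum>j<n. \<Sum>a<p. \<Sum>b<p. v i a * symG GA GC i j a b * v j b)
     = (\<Sum>i<n. \<Sum>j<n. (if i = j then bf p (\<lambda>a b. GA a b - GC a b) (v i) (v i) else 0))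
       + (\<Sum>i<n. \<Sum>j<n. \<Sum>a<p. \<Sum>b<p. v i a * GC a b * v j b)"
    by (simp only: s1 sum.distrib)
  also have "(\<Sum>i<n. \<Sum>j<n. (if i = j then bf p (\<lambda>a b. GA a b - GC a b) (v i) (v i) else 0))
      = (\<Sum>i<n. bf p (\<lambda>a b. GA a b - GC a b) (v i) (v i))"
    by simp
  also have "(\<Sum>i<n. \<Sum>j<n. \<Sum>a<p. \<Sum>b<p. v i a * GC a b * v j b)
      = (\<Sum>a<p. \<Sum>b<p. \<Sum>i<n. \<Sum>j<n. v i a * GC a b * v j b)" by (rule swap_4)
  also have "\<dots> = bf p GC (\<lambda>a. \<Sum>i<n. v i a) (\<lambda>a. \<Sum>i<n. v i a)"
    unfolding bf_def
  proof (intro sum.cong refl)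
    fix a b
    show "(\<Sum>i<n. \<Sum>j<n. v i a * GC a b * v j b) = (\<Sum>i<n. v i a) * GC a b * (\<Sum>i<n. v i b)"
      by (simp add: sum_distrib_left sum_distrib_right) (rule sum.swap)
  qed
  finally show ?thesis .
qed

lemma sum01:
  assumes "(n::nat) \<ge> 2" "\<And>i::nat. 2 \<le> i \<Longrightarrow> g i = 0"
  shows "(\<Sum>i<n. g i) = g 0 + (g 1 :: real)"
proof -
  have "(\<Sum>i<n. g i) = (\<Sum>i\<in>{0,1}. g i)"
    by (rule sum.mono_neutral_right) (use assms in auto)
  then show ?thesis by simp
qed

lemma psd_gram_sym:
  assumes n: "n \<ge> 2"
  shows "psd_gram n p (symG GA GC) \<longleftrightarrow>
     psd_mat p (\<lambda>a b. GA a b - GC a b) \<and> psd_mat p (\<lambda>a b. GA a b + (real n - 1) * GC a b)"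
proof
  assume G: "psd_gram n p (symG GA GC)"
  have n0: "0 < n" "1 < n" using n by auto
  have symA: "GA a b = GA b a" if "a < p" "b < p" for a b
    using G that n0 unfolding psd_gram_def symG_def by fastforce
  have symC: "GC a b = GC b a" if "a < p" "b < p" for a b
  proof -
    have "symG GA GC 0 1 a b = symG GA GC 1 0 b a"
      using G that n0 unfolding psd_gram_def by blast
    then show ?thesis unfolding symG_def by simp
  qed
  have Q: "0 \<le> (\<Sum>i<n. bf p (\<lambda>a b. GA a b - GC a b) (v i) (v i)) + bf p GC (\<lambda>a. \<Sum>i<n. v i a) (\<lambda>a. \<Sum>i<n. v i a)" for v
    using G unfolding psd_gram_def Q_sym[symmetric] by blast
  show "psd_mat p (\<lambda>a b. GA a b - GC a b) \<and> psd_mat p (\<lambda>a b. GA a b + (real n - 1) * GC a b)"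
  proof
    show "psd_mat p (\<lambda>a b. GA a b - GC a b)"
      unfolding psd_mat_iff_bf
    proof (intro conjI allI impI)
      fix a b assume "a < p" "b < p"
      then show "GA a b - GC a b = GA b a - GC b a" using symA symC by simp
    next
      fix x :: "nat \<Rightarrow> real"
      define v where "v = (\<lambda>i::nat. if i = 0 then x else if i = 1 then (\<lambda>a. - x a) else (\<lambda>a. 0))"
      have s: "(\<Sum>i<n. v i a) = 0" for a
        by (subst sum01[OF n]) (auto simp: v_def)
      have t: "(\<Sum>i<n. bf p (\<lambda>a b. GA a b - GC a b) (v i) (v i))
          = 2 * bf p (\<lambda>a b. GA a b - GC a b) x x"
        by (subst sum01[OF n]) (auto simp: v_def bf_neg_left bf_neg_right bf_zero_left)
      have "0 \<le> 2 * bf p (\<lambda>a b. GA a b - GC a b) x x"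
        using Q[of v] unfolding s t by (simp add: bf_zero_left)
      then show "0 \<le> bf p (\<lambda>a b. GA a b - GC a b) x x" by simp
    qed
  next
    show "psd_mat p (\<lambda>a b. GA a b + (real n - 1) * GC a b)"
      unfolding psd_mat_iff_bf
    proof (intro conjI allI impI)
      fix a b assume "a < p" "b < p"
      then show "GA a b + (real n - 1) * GC a b = GA b a + (real n - 1) * GC b a" using symA symC by simp
    next
      fix x :: "nat \<Rightarrow> real"
      have s: "(\<lambda>a. \<Sum>i<n. x a) = (\<lambda>a. real n * x a)" by simp
      have "0 \<le> real n * bf p (\<lambda>a b. GA a b - GC a b) x x + bf p GC (\<lambda>a. real n * x a) (\<lambda>a. real n * x a)"
        using Q[of "\<lambda>i. x"] unfolding s by simp
      also have "\<dots> = real n * bf p (\<lambda>a b. GA a b + (real n - 1) * GC a b) x x"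
        by (simp add: bf_scale_left bf_scale_right bf_mat_add bf_mat_diff algebra_simps)
      finally show "0 \<le> bf p (\<lambda>a b. GA a b + (real n - 1) * GC a b) x x"
        using n0 by (simp add: zero_le_mult_iff)
    qed
  qed
next
  assume P: "psd_mat p (\<lambda>a b. GA a b - GC a b) \<and> psd_mat p (\<lambda>a b. GA a b + (real n - 1) * GC a b)"
  have n0: "0 < n" "1 < n" using n by auto
  define M where "M = (\<lambda>a b. GA a b - GC a b)"
  have symC: "GC a b = GC b a" if "a < p" "b < p" for a b
  proof -
    have e1: "GA a b - GC a b = GA b a - GC b a" using P that unfolding psd_mat_def by blast
    have e2: "GA a b + (real n - 1) * GC a b = GA b a + (real n - 1) * GC b a"
      using P that unfolding psd_mat_def by blast
    have e2': "GA a b + real n * GC a b - GC a b = GA b a + real n * GC b a - GC b a"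
      using e2 by (simp add: algebra_simps)
    have "real n * GC a b = real n * GC b a" using e1 e2' by linarith
    then show ?thesis using n0 by simp
  qed
  have symA: "GA a b = GA b a" if "a < p" "b < p" for a b
  proof -
    have e1: "GA a b - GC a b = GA b a - GC b a" using P that unfolding psd_mat_def by blast
    then show ?thesis using symC[OF that] by simp
  qed
  show "psd_gram n p (symG GA GC)"
    unfolding psd_gram_def
  proof (intro conjI allI impI)
    fix i j a b assume "i < n" "j < n" "a < p" "b < p"
    then show "symG GA GC i j a b = symG GA GC j i b a" using symA symC by (simp add: symG_def)
  next
    fix v :: "nat \<Rightarrow> nat \<Rightarrow> real"
    define N where "N = real n"
    have N0: "N > 0" unfolding N_def using n0 by simp
    define s where "s = (\<lambda>a. \<Sum>i<n. v i a)"
    define u where "u = (\<lambda>a. s a / N)"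
    have su: "s = (\<lambda>a. N * u a)" unfolding u_def using N0 by auto
    define w where "w = (\<lambda>i a. v i a - u a)"
    have bw: "bf p M (w i) (w i) = bf p M (v i) (v i) - bf p M (v i) u - bf p M u (v i) + bf p M u u" for i
      unfolding w_def by (simp add: bf_diff_left bf_diff_right)
    have L: "(\<Sum>i<n. bf p M (v i) u) = N * bf p M u u"
    proof -
      have "(\<Sum>i<n. bf p M (v i) u) = bf p M s u" unfolding s_def by (simp add: bf_sum_left)
      then show ?thesis unfolding su by (simp add: bf_scale_left)
    qed
    have R: "(\<Sum>i<n. bf p M u (v i)) = N * bf p M u u"
    proof -
      have "(\<Sum>i<n. bf p M u (v i)) = bf p M u s" unfolding s_def by (simp add: bf_sum_right)
      then show ?thesis unfolding su by (simp add: bf_scale_right)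
    qed
    have "0 \<le> (\<Sum>i<n. bf p M (w i) (w i))"
      using P unfolding M_def by (intro sum_nonneg psd_mat_bf) auto
    also have "\<dots> = (\<Sum>i<n. bf p M (v i) (v i)) - N * bf p M u u"
      unfolding bw sum.distrib sum_subtractf L R by (simp add: N_def)
    finally have low: "N * bf p M u u \<le> (\<Sum>i<n. bf p M (v i) (v i))" by simp
    have c: "bf p GC s s = N * N * bf p GC u u"
      unfolding su by (simp add: bf_scale_left bf_scale_right)
    have pos: "0 \<le> bf p (\<lambda>a b. GA a b + (real n - 1) * GC a b) u u"
      using P by (intro psd_mat_bf) auto
    have "N * bf p (\<lambda>a b. GA a b + (real n - 1) * GC a b) u u = N * bf p M u u + N * N * bf p GC u u"
      unfolding M_def N_def by (simp add: bf_mat_add bf_mat_diff algebra_simps)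
    also have "\<dots> \<le> (\<Sum>i<n. bf p M (v i) (v i)) + bf p GC s s"
      using low c by simp
    also have "\<dots> = (\<Sum>i<n. \<Sum>j<n. \<Sum>a<p. \<Sum>b<p. v i a * symG GA GC i j a b * v j b)"
      unfolding Q_sym M_def s_def ..
    finally show "0 \<le> (\<Sum>i<n. \<Sum>j<n. \<Sum>a<p. \<Sum>b<p. v i a * symG GA GC i j a b * v j b)"
      using N0 pos by (meson mult_nonneg_nonneg less_imp_le order_trans)
  qed
qed

lemma psd_mat_scale:
  assumes c: "(c::real) > 0"
  shows "psd_mat K (\<lambda>k l. c * M k l) \<longleftrightarrow> psd_mat K M"
proof -
  have q: "(\<Sum>k<K. \<Sum>l<K. v k * (c * M k l) * v l) = c * (\<Sum>k<K. \<Sum>l<K. v k * M k l * v l)" for v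
    by (simp add: sum_distrib_left mult_ac)
  have s: "(\<forall>k<K. \<forall>l<K. c * M k l = c * M l k) \<longleftrightarrow> (\<forall>k<K. \<forall>l<K. M k l = M l k)"
    using c by simp
  have p: "(\<forall>v. 0 \<le> c * (\<Sum>k<K. \<Sum>l<K. v k * M k l * v l)) \<longleftrightarrow> (\<forall>v. 0 \<le> (\<Sum>k<K. \<Sum>l<K. v k * M k l * v l))"
    using c by (simp add: zero_le_mult_iff)
  show ?thesis unfolding psd_mat_def q s p ..
qed

definition GMf :: "nat \<Rightarrow> (nat \<Rightarrow> nat \<Rightarrow> real) \<Rightarrow> (nat \<Rightarrow> nat \<Rightarrow> real) \<Rightarrow> nat \<Rightarrow> nat \<Rightarrow> real" where
  "GMf m GA GC = (\<lambda>a b. (GA a b + (real m - 1) * GC a b) / real m)"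

lemma symG_app: "symG GA GC i j a b = (if i = j then GA a b else GC a b)"
  by (simp add: symG_def)

lemma sum_if_eq: "i < m \<Longrightarrow> (\<Sum>j<m. if i = j then (A::real) else C) = A + (real m - 1) * C"
proof -
  assume i: "i < m"
  have "(\<Sum>j<m. if i = j then A else C) = (\<Sum>j<m. C + (if i = j then A - C else 0))"
    by (rule sum.cong) auto
  also have "\<dots> = real m * C + (A - C)" using i by (simp add: sum.distrib)
  finally show ?thesis by (simp add: algebra_simps)
qed

lemma sum_sym_double: "(\<Sum>i<m. \<Sum>j<m. symG GA GC i j a b) = real m * (GA a b + (real m - 1) * GC a b)"
  by (simp add: symG_app sum_if_eq)

lemma avg_inner_sym: "m > 0 \<Longrightarrow> avg_inner m (symG GA GC) a b = GMf m GA GC a b"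
  unfolding avg_inner_def GMf_def sum_sym_double by (simp add: power2_eq_square)

lemma perpG_sym: "m > 0 \<Longrightarrow> perpG m (symG GA GC) a b = real m * (GA a b - GMf m GA GC a b)"
  unfolding perpG_def GMf_def sum_sym_double by (simp add: symG_app field_simps)

lemma avgF_sym: "m > 0 \<Longrightarrow> avgF m (symF fA) a = fA a"
  unfolding avgF_def symF_def by simp

lemma avgD_sym: "m > 0 \<Longrightarrow> avgD m (symG GA GC) a b = GA a b"
  unfolding avgD_def by (simp add: symG_app)

definition si_canon :: "nat \<Rightarrow> nat \<Rightarrow> si_expr \<Rightarrow> (nat \<Rightarrow> real) \<Rightarrow> (nat \<Rightarrow> nat \<Rightarrow> real) \<Rightarrow> (nat \<Rightarrow> nat \<Rightarrow> real) \<Rightarrow> real" where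
  "si_canon p q e fA GA GM = si_c0 e + (\<Sum>a<q. si_cf e a * fA a)
      + (\<Sum>a<p. \<Sum>b<p. si_cA e a b * GA a b)
      + (\<Sum>a<p. \<Sum>b<p. si_cC e a b * GM a b)"

lemma si_eval_sym: "m > 0 \<Longrightarrow> si_eval m p q e (symF fA) (symG GA GC) = si_canon p q e fA GA (GMf m GA GC)"
  unfolding si_eval_def si_canon_def by (simp add: avgF_sym avgD_sym avg_inner_sym)

definition cons_canon :: "real \<Rightarrow> real \<Rightarrow> nat list \<times> nat list \<Rightarrow> (nat \<Rightarrow> nat \<Rightarrow> real) \<Rightarrow> (nat \<Rightarrow> nat \<Rightarrow> real) \<Rightarrow> bool" where
  "cons_canon lm lp blk GA GM \<longleftrightarrow>
     (let xs = fst blk; ys = snd blk; K = length xs; DD = (\<lambda>a b. GA a b - GM a b) in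
       (\<forall>k<K. GM (xs!k) (xs!k) - 2 * GM (xs!k) (ys!k) + GM (ys!k) (ys!k) = 0) \<and>
       (\<forall>k<K. \<forall>l<K. DD (xs!k) (ys!l) = DD (ys!k) (xs!l)) \<and>
       psd_mat K (\<lambda>k l. - (DD (ys!k) (ys!l) - lp * DD (ys!k) (xs!l)
                          - lm * DD (xs!k) (ys!l) + lm * lp * DD (xs!k) (xs!l))))"

lemma consensus_sym:
  assumes "m > 0"
  shows "consensus_holds m lm lp blk (symG GA GC) \<longleftrightarrow> cons_canon lm lp blk GA (GMf m GA GC)"
proof -
  define N where "N = real m"
  have N: "N > 0" unfolding N_def using assms by simp
  define DD where "DD = (\<lambda>a b. GA a b - GMf m GA GC a b)"
  have pp: "perpG m (symG GA GC) a b = N * DD a b" for a b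
    unfolding N_def DD_def using perpG_sym[OF assms] .
  have ai: "avg_inner m (symG GA GC) a b = GMf m GA GC a b" for a b
    using avg_inner_sym[OF assms] .
  have e1: "(N * DD a b = N * DD c d) \<longleftrightarrow> (DD a b = DD c d)" for a b c d using N by simp
  have e2: "psd_mat K (\<lambda>k l. - (N * DD (ys!k) (ys!l) - lp * (N * DD (ys!k) (xs!l))
                          - lm * (N * DD (xs!k) (ys!l)) + lm * lp * (N * DD (xs!k) (xs!l))))
        \<longleftrightarrow> psd_mat K (\<lambda>k l. - (DD (ys!k) (ys!l) - lp * DD (ys!k) (xs!l)
                          - lm * DD (xs!k) (ys!l) + lm * lp * DD (xs!k) (xs!l)))" for K xs ys
  proof -
    have "psd_mat K (\<lambda>k l. - (N * DD (ys!k) (ys!l) - lp * (N * DD (ys!k) (xs!l))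
                          - lm * (N * DD (xs!k) (ys!l)) + lm * lp * (N * DD (xs!k) (xs!l))))
        = psd_mat K (\<lambda>k l. N * (- (DD (ys!k) (ys!l) - lp * DD (ys!k) (xs!l)
                          - lm * DD (xs!k) (ys!l) + lm * lp * DD (xs!k) (xs!l))))"
      by (rule psd_mat_cong) (simp add: algebra_simps)
    also have "\<dots> \<longleftrightarrow> psd_mat K (\<lambda>k l. - (DD (ys!k) (ys!l) - lp * DD (ys!k) (xs!l)
                          - lm * DD (xs!k) (ys!l) + lm * lp * DD (xs!k) (xs!l)))"
      by (rule psd_mat_scale[OF N])
    finally show ?thesis .
  qed
  show ?thesis
    unfolding consensus_holds_def cons_canon_def Let_def pp ai e1 e2 by (simp only: DD_def)
qed

lemma psd_gram_sym2:
  assumes m: "m \<ge> 2"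
  shows "psd_gram m p (symG GA GC) \<longleftrightarrow>
     psd_mat p (\<lambda>a b. GA a b - GMf m GA GC a b) \<and> psd_mat p (GMf m GA GC)"
proof -
  define N where "N = real m"
  have N: "N > 1" unfolding N_def using m by simp
  have c1: "GA a b - GC a b = (N / (N - 1)) * (GA a b - GMf m GA GC a b)" for a b
    unfolding GMf_def N_def[symmetric] using N by (simp add: field_simps)
  have c2: "GA a b + (real m - 1) * GC a b = N * GMf m GA GC a b" for a b
    unfolding GMf_def N_def[symmetric] using N by (simp add: field_simps)
  have "psd_mat p (\<lambda>a b. GA a b - GC a b) \<longleftrightarrow> psd_mat p (\<lambda>a b. (N / (N - 1)) * (GA a b - GMf m GA GC a b))"
    unfolding c1 ..
  also have "\<dots> \<longleftrightarrow> psd_mat p (\<lambda>a b. GA a b - GMf m GA GC a b)"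
    by (rule psd_mat_scale) (use N in simp)
  finally have A: "psd_mat p (\<lambda>a b. GA a b - GC a b) \<longleftrightarrow> psd_mat p (\<lambda>a b. GA a b - GMf m GA GC a b)" .
  have "psd_mat p (\<lambda>a b. GA a b + (real m - 1) * GC a b) \<longleftrightarrow> psd_mat p (\<lambda>a b. N * GMf m GA GC a b)"
    unfolding c2 ..
  also have "\<dots> \<longleftrightarrow> psd_mat p (GMf m GA GC)"
    by (rule psd_mat_scale) (use N in simp)
  finally have B: "psd_mat p (\<lambda>a b. GA a b + (real m - 1) * GC a b) \<longleftrightarrow> psd_mat p (GMf m GA GC)" .
  show ?thesis using psd_gram_sym[OF m] A B by simp
qed

lemma common_sym:
  assumes m: "m \<ge> 2"
  shows "(\<forall>i<m. \<forall>j<m. symG GA GC i i c c - 2 * symG GA GC i j c c + symG GA GC j j c c = 0)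
     \<longleftrightarrow> GA c c = GMf m GA GC c c"
proof -
  define N where "N = real m"
  have N: "N > 1" unfolding N_def using m by simp
  have c1: "GA c c - GC c c = (N / (N - 1)) * (GA c c - GMf m GA GC c c)"
    unfolding GMf_def N_def[symmetric] using N by (simp add: field_simps)
  have eq: "GA c c = GC c c \<longleftrightarrow> GA c c = GMf m GA GC c c"
  proof -
    have "GA c c = GC c c \<longleftrightarrow> GA c c - GC c c = 0" by simp
    also have "\<dots> \<longleftrightarrow> GA c c - GMf m GA GC c c = 0" unfolding c1 using N by simp
    finally show ?thesis by simp
  qed
  have "(\<forall>i<m. \<forall>j<m. symG GA GC i i c c - 2 * symG GA GC i j c c + symG GA GC j j c c = 0)
     \<longleftrightarrow> GA c c = GC c c"
  proof
    assume "\<forall>i<m. \<forall>j<m. symG GA GC i i c c - 2 * symG GA GC i j c c + symG GA GC j j c c = 0"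
    then have "symG GA GC 0 0 c c - 2 * symG GA GC 0 1 c c + symG GA GC 1 1 c c = 0"
      using m by auto
    then show "GA c c = GC c c" by (simp add: symG_app)
  next
    assume "GA c c = GC c c"
    then show "\<forall>i<m. \<forall>j<m. symG GA GC i i c c - 2 * symG GA GC i j c c + symG GA GC j j c c = 0"
      by (simp add: symG_app)
  qed
  then show ?thesis using eq by simp
qed

lemma sa_holds_sym: "sa_holds p q c (symF fA) (symG GA GC) i = sa_holds p q c (\<lambda>_. fA) (\<lambda>_ _. GA) 0"
  unfolding sa_holds_def sa_eval_def by (simp add: symF_def symG_app)

lemma si_holds_sym: "m > 0 \<Longrightarrow> si_holds m p q c (symF fA) (symG GA GC) \<longleftrightarrow>
    psd_mat (fst c) (\<lambda>k l. si_canon p q (snd c k l) fA GA (GMf m GA GC))"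
  unfolding si_holds_def by (simp add: si_eval_sym)

definition Psi :: "pep_data \<Rightarrow> sa_lmi list \<Rightarrow> si_lmi list \<Rightarrow> (nat \<Rightarrow> real) \<Rightarrow> (nat \<Rightarrow> nat \<Rightarrow> real) \<Rightarrow> (nat \<Rightarrow> nat \<Rightarrow> real) \<Rightarrow> bool" where
  "Psi D ISA ISI fA GA GM \<longleftrightarrow>
     (psd_mat (pd_p D) (\<lambda>a b. GA a b - GM a b) \<and> psd_mat (pd_p D) GM) \<and>
     (\<forall>c \<in> set (pd_local D). sa_holds (pd_p D) (pd_q D) c (\<lambda>_. fA) (\<lambda>_ _. GA) 0) \<and>
     (\<forall>c \<in> set (pd_common D). GA c c = GM c c) \<and>
     GM (pd_gopt D) (pd_gopt D) = 0 \<and>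
     (\<forall>blk \<in> set (pd_cons D). cons_canon (pd_lmin D) (pd_lmax D) blk GA GM) \<and>
     ((\<forall>c \<in> set ISA. sa_holds (pd_p D) (pd_q D) c (\<lambda>_. fA) (\<lambda>_ _. GA) 0) \<and>
      (\<forall>c \<in> set ISI. psd_mat (fst c) (\<lambda>k l. si_canon (pd_p D) (pd_q D) (snd c k l) fA GA GM)))"

lemma all_less_const: "0 < (m::nat) \<Longrightarrow> (\<forall>i<m. X) = X"
  by auto

lemma feas_Psi:
  assumes m: "m \<ge> 2"
    and IH: "\<And>F G. Init F G \<longleftrightarrow> (\<forall>i<m. \<forall>c \<in> set ISA. sa_holds (pd_p D) (pd_q D) c F G i) \<and>
               (\<forall>c \<in> set ISI. si_holds m (pd_p D) (pd_q D) c F G)"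
  shows "pep_feasible m D Init (symF fA) (symG GA GC) \<longleftrightarrow> Psi D ISA ISI fA GA (GMf m GA GC)"
proof -
  have m0: "0 < m" using m by simp
  show ?thesis
    unfolding pep_feasible_def Psi_def
    by (simp only: IH psd_gram_sym2[OF m] sa_holds_sym common_sym[OF m] avg_inner_sym[OF m0]
        consensus_sym[OF m0] si_holds_sym[OF m0] all_less_const[OF m0])
qed

lemma GMf_inv: "m \<ge> 2 \<Longrightarrow> GMf m GA (\<lambda>a b. (real m * GM a b - GA a b) / (real m - 1)) = GM"
  by (simp add: GMf_def fun_eq_iff field_simps)

lemma reduced_set_Psi:
  assumes m: "m \<ge> 2"
    and IH: "\<And>F G. Init F G \<longleftrightarrow> (\<forall>i<m. \<forall>c \<in> set ISA. sa_holds (pd_p D) (pd_q D) c F G i) \<and>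
               (\<forall>c \<in> set ISI. si_holds m (pd_p D) (pd_q D) c F G)"
  shows "reduced_set m D Init = {(fA, GA, GM). Psi D ISA ISI fA GA GM}"
proof (intro set_eqI iffI)
  fix X assume "X \<in> reduced_set m D Init"
  then have "\<exists>fA GA GC. X = (fA, GA, (\<lambda>a b. (GA a b + (real m - 1) * GC a b) / real m)) \<and>
      pep_feasible m D Init (symF fA) (symG GA GC)"
    by (simp only: reduced_set_def mem_Collect_eq)
  then obtain fA GA GC where X: "X = (fA, GA, GMf m GA GC)"
      and f: "pep_feasible m D Init (symF fA) (symG GA GC)"
    unfolding GMf_def by blast
  show "X \<in> {(fA, GA, GM). Psi D ISA ISI fA GA GM}"
    using f feas_Psi[OF m IH] X by simp
next
  fix X assume "X \<in> {(fA, GA, GM). Psi D ISA ISI fA GA GM}"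
  then obtain fA GA GM where X: "X = (fA, GA, GM)" and P: "Psi D ISA ISI fA GA GM" by auto
  define GC where "GC = (\<lambda>a b. (real m * GM a b - GA a b) / (real m - 1))"
  have g: "GMf m GA GC = GM" unfolding GC_def by (rule GMf_inv[OF m])
  have f: "pep_feasible m D Init (symF fA) (symG GA GC)"
    using feas_Psi[OF m IH] P g by simp
  have "X = (fA, GA, (\<lambda>a b. (GA a b + (real m - 1) * GC a b) / real m))"
    using X g unfolding GMf_def by simp
  then show "X \<in> reduced_set m D Init"
    unfolding reduced_set_def mem_Collect_eq
    by (intro exI[of _ fA] exI[of _ GA] exI[of _ GC] conjI f)
qed

lemma reduced_value_Psi:
  assumes m: "m \<ge> 2"
    and IH: "\<And>F G. Init F G \<longleftrightarrow> (\<forall>i<m. \<forall>c \<in> set ISA. sa_holds (pd_p D) (pd_q D) c F G i) \<and>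
               (\<forall>c \<in> set ISI. si_holds m (pd_p D) (pd_q D) c F G)"
    and PH: "\<And>F G. Perf F G = si_eval m (pd_p D) (pd_q D) P F G"
  shows "reduced_value m D Init Perf =
     (SUP X \<in> {(fA, GA, GM). Psi D ISA ISI fA GA GM}.
        ereal (si_canon (pd_p D) (pd_q D) P (fst X) (fst (snd X)) (snd (snd X))))"
  unfolding reduced_value_def
proof (rule SUP_eq)
  have m0: "0 < m" using m by simp
  fix X assume "X \<in> {(fA, GA, GC). pep_feasible m D Init (symF fA) (symG GA GC)}"
  then obtain fA GA GC where X: "X = (fA, GA, GC)" and f: "pep_feasible m D Init (symF fA) (symG GA GC)"
    by auto
  have "Psi D ISA ISI fA GA (GMf m GA GC)" using f feas_Psi[OF m IH] by simp
  moreover have "Perf (symF fA) (symG GA GC) = si_canon (pd_p D) (pd_q D) P fA GA (GMf m GA GC)"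
    using PH si_eval_sym[OF m0] by simp
  ultimately show "\<exists>Y\<in>{(fA, GA, GM). Psi D ISA ISI fA GA GM}.
      ereal (Perf (symF (fst X)) (symG (fst (snd X)) (snd (snd X))))
        \<le> ereal (si_canon (pd_p D) (pd_q D) P (fst Y) (fst (snd Y)) (snd (snd Y)))"
    using X by (intro bexI[of _ "(fA, GA, GMf m GA GC)"]) auto
next
  have m0: "0 < m" using m by simp
  fix Y assume "Y \<in> {(fA, GA, GM). Psi D ISA ISI fA GA GM}"
  then obtain fA GA GM where Y: "Y = (fA, GA, GM)" and P: "Psi D ISA ISI fA GA GM" by auto
  define GC where "GC = (\<lambda>a b. (real m * GM a b - GA a b) / (real m - 1))"
  have g: "GMf m GA GC = GM" unfolding GC_def by (rule GMf_inv[OF m])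
  have f: "pep_feasible m D Init (symF fA) (symG GA GC)"
    using feas_Psi[OF m IH] P g by simp
  have "Perf (symF fA) (symG GA GC) = si_canon (pd_p D) (pd_q D) P fA GA GM"
    using PH si_eval_sym[OF m0] g by simp
  then show "\<exists>X\<in>{(fA, GA, GC). pep_feasible m D Init (symF fA) (symG GA GC)}.
      ereal (si_canon (pd_p D) (pd_q D) P (fst Y) (fst (snd Y)) (snd (snd Y)))
        \<le> ereal (Perf (symF (fst X)) (symG (fst (snd X)) (snd (snd X))))"
    using Y f by (intro bexI[of _ "(fA, GA, GC)"]) auto
qed

lemma value_Psi:
  assumes m: "m \<ge> 2"
    and IH: "\<And>F G. Init F G \<longleftrightarrow> (\<forall>i<m. \<forall>c \<in> set ISA. sa_holds (pd_p D) (pd_q D) c F G i) \<and>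
               (\<forall>c \<in> set ISI. si_holds m (pd_p D) (pd_q D) c F G)"
    and PH: "\<And>F G. Perf F G = si_eval m (pd_p D) (pd_q D) P F G"
  shows "pep_value m D Init Perf =
     (SUP X \<in> {(fA, GA, GM). Psi D ISA ISI fA GA GM}.
        ereal (si_canon (pd_p D) (pd_q D) P (fst X) (fst (snd X)) (snd (snd X))))"
proof -
  have m0: "0 < m" using m by simp
  have cI0: "cvxp m (\<lambda>F G. (\<forall>i. i < m \<longrightarrow> (\<forall>c \<in> set ISA. sa_holds (pd_p D) (pd_q D) c F G i)) \<and>
               (\<forall>c \<in> set ISI. si_holds m (pd_p D) (pd_q D) c F G))"
    by (intro cvx_conj cvx_all cvx_imp cvx_ball cvx_sa_holds cvx_si_holds)
  have cI: "cvxp m Init" by (rule cvx_ext[OF cI0]) (simp add: IH)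
  have gP: "goodf m Perf" by (rule good_ext[OF good_si_eval]) (simp add: PH)
  have inv: "pep_feasible m D Init (permF \<sigma> F) (permG \<sigma> G) \<and> Perf (permF \<sigma> F) (permG \<sigma> G) = Perf F G"
    if s: "\<sigma> permutes {..<m}" and f: "pep_feasible m D Init F G" for \<sigma> F G
  proof
    have im: "\<And>i. i < m \<Longrightarrow> \<sigma> i < m" using permutes_in_image[OF s] by auto
    have II: "Init (permF \<sigma> F) (permG \<sigma> G)" if "Init F G" for F G
      using that unfolding IH by (simp add: sa_holds_perm si_holds_perm[OF s] im)
    show "pep_feasible m D Init (permF \<sigma> F) (permG \<sigma> G)" by (rule feas_perm[OF s II f])
    show "Perf (permF \<sigma> F) (permG \<sigma> G) = Perf F G" unfolding PH by (rule si_eval_perm[OF s])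
  qed
  have "pep_value m D Init Perf = reduced_value m D Init Perf"
    by (rule value_main[OF m cI gP inv])
  also have "\<dots> = (SUP X \<in> {(fA, GA, GM). Psi D ISA ISI fA GA GM}.
        ereal (si_canon (pd_p D) (pd_q D) P (fst X) (fst (snd X)) (snd (snd X))))"
    by (rule reduced_value_Psi[OF m IH PH])
  finally show ?thesis .
qed

theorem theorem3:
  fixes n :: nat and D :: pep_data
    and Init :: "nat \<Rightarrow> fvals \<Rightarrow> gram \<Rightarrow> bool"
    and Perf :: "nat \<Rightarrow> fvals \<Rightarrow> gram \<Rightarrow> real"
  assumes n2: "n \<ge> 2"
    and lam: "-1 < pd_lmin D" "pd_lmin D \<le> pd_lmax D" "pd_lmax D < 1"
    and wf: "pep_wf D"
    and init_repr: "lmi_representable n (pd_p D) (pd_q D) (Init n)"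
    and perf_lin: "gram_affine n (pd_p D) (pd_q D) (Perf n)"
    and equiv: "agents_equivalent n D (Init n) (Perf n)"
  shows
    "(\<forall>GA GC. psd_gram n (pd_p D) (symG GA GC) \<longleftrightarrow>
         psd_mat (pd_p D) (\<lambda>a b. GA a b - GC a b) \<and>
         psd_mat (pd_p D) (\<lambda>a b. GA a b + (real n - 1) * GC a b))
     \<and> pep_value n D (Init n) (Perf n) = reduced_value n D (Init n) (Perf n)
     \<and> ((\<exists>(ISA :: sa_lmi list) (ISI :: si_lmi list) (P :: si_expr).
            (\<forall>m\<ge>2. \<forall>F G. Init m F G \<longleftrightarrow>
               (\<forall>i<m. \<forall>c \<in> set ISA. sa_holds (pd_p D) (pd_q D) c F G i) \<and>
               (\<forall>c \<in> set ISI. si_holds m (pd_p D) (pd_q D) c F G)) \<and>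
            (\<forall>m\<ge>2. \<forall>F G. Perf m F G = si_eval m (pd_p D) (pd_q D) P F G))
         \<longrightarrow> (\<forall>m\<ge>2. reduced_set m D (Init m) = reduced_set n D (Init n) \<and>
                     pep_value m D (Init m) (Perf m) = pep_value n D (Init n) (Perf n)))"
proof -
  have P1: "\<forall>GA GC. psd_gram n (pd_p D) (symG GA GC) \<longleftrightarrow>
         psd_mat (pd_p D) (\<lambda>a b. GA a b - GC a b) \<and>
         psd_mat (pd_p D) (\<lambda>a b. GA a b + (real n - 1) * GC a b)"
    by (intro allI) (rule psd_gram_sym[OF n2])
  have inv: "pep_feasible n D (Init n) (permF \<sigma> F) (permG \<sigma> G) \<and> Perf n (permF \<sigma> F) (permG \<sigma> G) = Perf n F G"
    if s: "\<sigma> permutes {..<n}" and f: "pep_feasible n D (Init n) F G" for \<sigma> F G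
    by (rule mp[OF spec[OF spec[OF equiv_perm[OF equiv s]]] f])
  have P2: "pep_value n D (Init n) (Perf n) = reduced_value n D (Init n) (Perf n)"
    by (rule value_main[OF n2 cvx_lmi[OF init_repr] good_gram_affine[OF perf_lin] inv])
  have P3: "(\<exists>(ISA :: sa_lmi list) (ISI :: si_lmi list) (P :: si_expr).
            (\<forall>m\<ge>2. \<forall>F G. Init m F G \<longleftrightarrow>
               (\<forall>i<m. \<forall>c \<in> set ISA. sa_holds (pd_p D) (pd_q D) c F G i) \<and>
               (\<forall>c \<in> set ISI. si_holds m (pd_p D) (pd_q D) c F G)) \<and>
            (\<forall>m\<ge>2. \<forall>F G. Perf m F G = si_eval m (pd_p D) (pd_q D) P F G))
         \<longrightarrow> (\<forall>m\<ge>2. reduced_set m D (Init m) = reduced_set n D (Init n) \<and>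
                     pep_value m D (Init m) (Perf m) = pep_value n D (Init n) (Perf n))"
  proof (intro impI allI)
    fix m :: nat
    assume H: "\<exists>(ISA :: sa_lmi list) (ISI :: si_lmi list) (P :: si_expr).
            (\<forall>m\<ge>2. \<forall>F G. Init m F G \<longleftrightarrow>
               (\<forall>i<m. \<forall>c \<in> set ISA. sa_holds (pd_p D) (pd_q D) c F G i) \<and>
               (\<forall>c \<in> set ISI. si_holds m (pd_p D) (pd_q D) c F G)) \<and>
            (\<forall>m\<ge>2. \<forall>F G. Perf m F G = si_eval m (pd_p D) (pd_q D) P F G)"
      and m: "m \<ge> 2"
    from H obtain ISA ISI P where
      IH0: "\<forall>m\<ge>2. \<forall>F G. Init m F G \<longleftrightarrow>
               (\<forall>i<m. \<forall>c \<in> set ISA. sa_holds (pd_p D) (pd_q D) c F G i) \<and>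
               (\<forall>c \<in> set ISI. si_holds m (pd_p D) (pd_q D) c F G)"
      and PH0: "\<forall>m\<ge>2. \<forall>F G. Perf m F G = si_eval m (pd_p D) (pd_q D) P F G"
      by (elim exE conjE)
    note IH = IH0[rule_format] and PH = PH0[rule_format]
    show "reduced_set m D (Init m) = reduced_set n D (Init n) \<and>
          pep_value m D (Init m) (Perf m) = pep_value n D (Init n) (Perf n)"
    proof
      show "reduced_set m D (Init m) = reduced_set n D (Init n)"
        unfolding reduced_set_Psi[OF m IH[OF m]] reduced_set_Psi[OF n2 IH[OF n2]] ..
      show "pep_value m D (Init m) (Perf m) = pep_value n D (Init n) (Perf n)"
        unfolding value_Psi[OF m IH[OF m] PH[OF m]] value_Psi[OF n2 IH[OF n2] PH[OF n2]] ..
    qed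
  qed
  show ?thesis by (rule conjI[OF P1 conjI[OF P2 P3]])
qed

end
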